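(* Let $(G,\sigma)$ be a finite connected unbalanced signed graph satisfying $CD^\sigma(0,N)$ for some $N\in(1,\infty]$. Then \[ \mathrm{vol}(G)\leq 8\sqrt{\left(1+\sqrt{(N-1)/N}\right)\ln 2}\cdot d\,\iota^\sigma(G)\sqrt{(D+1)\lceil(D+1)/2\rceil}, \] where $d$ is the maximal vertex degree, $D$ the diameter, $\mathrm{vol}(G)=\sum_{x\in V}d_x$, and $\sqrt{(N-1)/N}:=1$ when $N=\infty$.
   Context: $G=(V,E)$ is a finite simple connected graph with degrees $d_x$; $\sigma:E\to\{\pm1\}$, $\sigma_{xy}=\sigma(\{x,y\})$; $(G,\sigma)$ is balanced if every cycle has sign product $+1$, unbalanced otherwise. The frustration index is $\iota^\sigma(G)=\min_{\tau:V\to\{\pm1\}}\sum_{\{x,y\}\in E}|\tau(x)-\sigma_{xy}\tau(y)|$. Signed Laplacian $\Delta^{\sigma}f(x)=\frac{1}{d_x}\sum_{y\sim x}(\sigma_{xy}f(y)-f(x))$; $\Delta$ is the case $\sigma\equiv+1$. $\Gamma^{\sigma}(f,g)=\frac12\{\Delta(fg)-g\Delta^{\sigma}f-f\Delta^{\sigma}g\}$, $\Gamma_2^{\sigma}(f,g)=\frac12\{\Delta\Gamma^{\sigma}(f,g)-\Gamma^{\sigma}(g,\Delta^{\sigma}f)-\Gamma^{\sigma}(f,\Delta^{\sigma}g)\}$. $CD^{\sigma}(K,N)$ means $\Gamma_2^{\sigma}(f,f)(x)\ge\frac1N(\Delta^\sigma f)^2(x)+K\Gamma^\sigma(f,f)(x)$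 for all $f:V\to\mathbb{R}$, $x\in V$ ($\frac1N=0$ if $N=\infty$). $\lceil\cdot\rceil$ is the ceiling. *)

theory Defs
  imports "HOL-Analysis.Analysis"
begin

definition signed_graph :: "'a set \<Rightarrow> ('a \<Rightarrow> 'a \<Rightarrow> bool) \<Rightarrow> ('a \<Rightarrow> 'a \<Rightarrow> real) \<Rightarrow> bool" where
  "signed_graph V adj \<sigma> \<longleftrightarrow> finite V \<and> V \<noteq> {} \<and>
     (\<forall>x y. adj x y \<longrightarrow> x \<in> V \<and> y \<in> V) \<and>
     (\<forall>x y. adj x y \<longrightarrow> adj y x) \<and> (\<forall>x. \<not> adj x x) \<and>
     (\<forall>x y. adj x y \<longrightarrow> \<sigma> x y = \<sigma> y x \<and> (\<sigma> x y = 1 \<or> \<sigma> x y = -1))"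

definition connected_graph :: "'a set \<Rightarrow> ('a \<Rightarrow> 'a \<Rightarrow> bool) \<Rightarrow> bool" where
  "connected_graph V adj \<longleftrightarrow> (\<forall>x\<in>V. \<forall>y\<in>V. adj\<^sup>*\<^sup>* x y)"

definition nbrs :: "'a set \<Rightarrow> ('a \<Rightarrow> 'a \<Rightarrow> bool) \<Rightarrow> 'a \<Rightarrow> 'a set" where
  "nbrs V adj x = {y \<in> V. adj x y}"

definition deg :: "'a set \<Rightarrow> ('a \<Rightarrow> 'a \<Rightarrow> bool) \<Rightarrow> 'a \<Rightarrow> nat" where
  "deg V adj x = card (nbrs V adj x)"

definition vol :: "'a set \<Rightarrow> ('a \<Rightarrow> 'a \<Rightarrow> bool) \<Rightarrow> nat" where
  "vol V adj = (\<Sum>x\<in>V. deg V adj x)"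

definition max_deg :: "'a set \<Rightarrow> ('a \<Rightarrow> 'a \<Rightarrow> bool) \<Rightarrow> nat" where
  "max_deg V adj = Max (deg V adj ` V)"

definition gdist :: "('a \<Rightarrow> 'a \<Rightarrow> bool) \<Rightarrow> 'a \<Rightarrow> 'a \<Rightarrow> nat" where
  "gdist adj x y = (LEAST n. (adj ^^ n) x y)"

definition diam :: "'a set \<Rightarrow> ('a \<Rightarrow> 'a \<Rightarrow> bool) \<Rightarrow> nat" where
  "diam V adj = Max {gdist adj x y | x y. x \<in> V \<and> y \<in> V}"

definition is_cycle :: "'a set \<Rightarrow> ('a \<Rightarrow> 'a \<Rightarrow> bool) \<Rightarrow> 'a list \<Rightarrow> bool" where
  "is_cycle V adj c \<longleftrightarrow> length c \<ge> 3 \<and> distinct c \<and> set c \<subseteq> V \<and>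
     (\<forall>i < length c. adj (c ! i) (c ! ((i + 1) mod length c)))"

definition cycle_sign :: "('a \<Rightarrow> 'a \<Rightarrow> real) \<Rightarrow> 'a list \<Rightarrow> real" where
  "cycle_sign \<sigma> c = (\<Prod>i < length c. \<sigma> (c ! i) (c ! ((i + 1) mod length c)))"

definition balanced :: "'a set \<Rightarrow> ('a \<Rightarrow> 'a \<Rightarrow> bool) \<Rightarrow> ('a \<Rightarrow> 'a \<Rightarrow> real) \<Rightarrow> bool" where
  "balanced V adj \<sigma> \<longleftrightarrow> (\<forall>c. is_cycle V adj c \<longrightarrow> cycle_sign \<sigma> c = 1)"

(* frustration index: minimum over switching functions tau : V -> {+1,-1} of
   sum over (unordered) edges {x,y} of |tau x - sigma_xy tau y|;
   the sum over unordered edges is written as half the sum over ordered adjacent pairs *)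
definition frustration :: "'a set \<Rightarrow> ('a \<Rightarrow> 'a \<Rightarrow> bool) \<Rightarrow> ('a \<Rightarrow> 'a \<Rightarrow> real) \<Rightarrow> real" where
  "frustration V adj \<sigma> = Min ((\<lambda>\<tau>. (\<Sum>x\<in>V. \<Sum>y\<in>nbrs V adj x. \<bar>\<tau> x - \<sigma> x y * \<tau> y\<bar>) / 2)
       ` (V \<rightarrow>\<^sub>E {-1, 1}))"

definition slap :: "'a set \<Rightarrow> ('a \<Rightarrow> 'a \<Rightarrow> bool) \<Rightarrow> ('a \<Rightarrow> 'a \<Rightarrow> real) \<Rightarrow> ('a \<Rightarrow> real) \<Rightarrow> 'a \<Rightarrow> real" where
  "slap V adj \<sigma> f x = (1 / real (deg V adj x)) * (\<Sum>y\<in>nbrs V adj x. \<sigma> x y * f y - f x)"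

definition lap :: "'a set \<Rightarrow> ('a \<Rightarrow> 'a \<Rightarrow> bool) \<Rightarrow> ('a \<Rightarrow> real) \<Rightarrow> 'a \<Rightarrow> real" where
  "lap V adj f x = slap V adj (\<lambda>_ _. 1) f x"

definition sGamma :: "'a set \<Rightarrow> ('a \<Rightarrow> 'a \<Rightarrow> bool) \<Rightarrow> ('a \<Rightarrow> 'a \<Rightarrow> real) \<Rightarrow> ('a \<Rightarrow> real) \<Rightarrow> ('a \<Rightarrow> real) \<Rightarrow> 'a \<Rightarrow> real" where
  "sGamma V adj \<sigma> f g x = (1/2) * (lap V adj (\<lambda>z. f z * g z) x
      - g x * slap V adj \<sigma> f x - f x * slap V adj \<sigma> g x)"

definition sGamma2 :: "'a set \<Rightarrow> ('a \<Rightarrow> 'a \<Rightarrow> bool) \<Rightarrow> ('a \<Rightarrow> 'a \<Rightarrow> real) \<Rightarrow> ('a \<Rightarrow> real) \<Rightarrow> ('a \<Rightarrow> real) \<Rightarrow> 'a \<Rightarrow> real" where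
  "sGamma2 V adj \<sigma> f g x = (1/2) * (lap V adj (sGamma V adj \<sigma> f g) x
      - sGamma V adj \<sigma> g (slap V adj \<sigma> f) x - sGamma V adj \<sigma> f (slap V adj \<sigma> g) x)"

definition invN :: "ereal \<Rightarrow> real" where
  "invN N = (if N = \<infinity> then 0 else 1 / real_of_ereal N)"

definition CD :: "'a set \<Rightarrow> ('a \<Rightarrow> 'a \<Rightarrow> bool) \<Rightarrow> ('a \<Rightarrow> 'a \<Rightarrow> real) \<Rightarrow> real \<Rightarrow> ereal \<Rightarrow> bool" where
  "CD V adj \<sigma> K N \<longleftrightarrow> (\<forall>f :: 'a \<Rightarrow> real. \<forall>x\<in>V.
      sGamma2 V adj \<sigma> f f x \<ge> invN N * (slap V adj \<sigma> f x)\<^sup>2 + K * sGamma V adj \<sigma> f f x)"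

definition sqrtN :: "ereal \<Rightarrow> real" where
  "sqrtN N = (if N = \<infinity> then 1 else sqrt ((real_of_ereal N - 1) / real_of_ereal N))"

end

theory Submission
  imports Defs
begin

locale sgr =
  fixes V :: "'a set" and adj :: "'a \<Rightarrow> 'a \<Rightarrow> bool" and \<sigma> :: "'a \<Rightarrow> 'a \<Rightarrow> real"
  assumes sg: "signed_graph V adj \<sigma>"
    and conn: "connected_graph V adj"
    and unb: "\<not> balanced V adj \<sigma>"
begin

abbreviation "Nb x \<equiv> nbrs V adj x"
abbreviation "dg x \<equiv> real (deg V adj x)"

lemma finV: "finite V" using sg unfolding signed_graph_def by auto
lemma Vne: "V \<noteq> {}" using sg unfolding signed_graph_def by auto
lemma adjV: "adj x y \<Longrightarrow> x \<in> V \<and> y \<in> V" using sg unfolding signed_graph_def by auto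
lemma adj_sym: "adj x y \<Longrightarrow> adj y x" using sg unfolding signed_graph_def by auto
lemma adj_irr: "\<not> adj x x" using sg unfolding signed_graph_def by auto
lemma sig_sym: "adj x y \<Longrightarrow> \<sigma> x y = \<sigma> y x" using sg unfolding signed_graph_def by auto
lemma sig_pm: "adj x y \<Longrightarrow> \<sigma> x y = 1 \<or> \<sigma> x y = -1" using sg unfolding signed_graph_def by auto
lemma sig_sq: "adj x y \<Longrightarrow> \<sigma> x y * \<sigma> x y = 1" using sig_pm by fastforce
lemma sig_abs: "adj x y \<Longrightarrow> \<bar>\<sigma> x y\<bar> = 1" using sig_pm by fastforce

lemma Nb_iff: "y \<in> Nb x \<longleftrightarrow> adj x y" unfolding nbrs_def using adjV by auto
lemma Nb_sub: "Nb x \<subseteq> V" unfolding nbrs_def by auto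
lemma Nb_fin: "finite (Nb x)" using Nb_sub finV finite_subset by blast

lemma deg_pos: assumes "x \<in> V" shows "deg V adj x > 0"
proof -
  obtain c where c: "is_cycle V adj c" using unb unfolding balanced_def by auto
  hence "length c \<ge> 3" "distinct c" "set c \<subseteq> V" unfolding is_cycle_def by auto
  moreover have l: "0 < length c" "1 < length c" using \<open>length c \<ge> 3\<close> by auto
  ultimately have "c ! 0 \<in> V" "c ! 1 \<in> V" "c ! 0 \<noteq> c ! 1"
    using nth_mem[of 0 c] nth_mem[of 1 c] nth_eq_iff_index_eq[of c 0 1] by auto
  then obtain y where y: "y \<in> V" "y \<noteq> x" by metis
  have "adj\<^sup>*\<^sup>* x y" using conn assms y unfolding connected_graph_def by auto
  then obtain z where "adj x z" using y(2) by (metis converse_rtranclpE)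
  hence "z \<in> Nb x" using Nb_iff by auto
  thus ?thesis unfolding deg_def using Nb_fin card_gt_0_iff by blast
qed

lemma dg_pos: "x \<in> V \<Longrightarrow> dg x > 0" using deg_pos by simp

lemma dg_le: "x \<in> V \<Longrightarrow> dg x \<le> real (max_deg V adj)"
  unfolding max_deg_def using finV by auto

lemma swap: "(\<Sum>x\<in>V. \<Sum>y\<in>Nb x. F x y) = (\<Sum>x\<in>V. \<Sum>y\<in>Nb x. F y x)"
proof -
  have "(\<Sum>x\<in>V. \<Sum>y\<in>Nb x. F x y) = (\<Sum>x\<in>V. \<Sum>y\<in>{y. y \<in> V \<and> adj x y}. F x y)"
    unfolding nbrs_def by simp
  also have "\<dots> = (\<Sum>y\<in>V. \<Sum>x\<in>{x. x \<in> V \<and> adj x y}. F x y)"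
    by (rule sum.swap_restrict[OF finV finV])
  also have "\<dots> = (\<Sum>x\<in>V. \<Sum>y\<in>Nb x. F y x)"
    unfolding nbrs_def by (intro sum.cong refl) (auto intro: adj_sym)
  finally show ?thesis .
qed

lemma slap_eq: "slap V adj \<sigma> f x = (\<Sum>y\<in>Nb x. \<sigma> x y * f y - f x) / dg x"
  unfolding slap_def by simp

lemma lap_eq: "lap V adj f x = (\<Sum>y\<in>Nb x. f y - f x) / dg x"
  unfolding lap_def slap_def by simp

lemma Gam_eq: "sGamma V adj \<sigma> f g x =
   (\<Sum>y\<in>Nb x. (\<sigma> x y * f y - f x) * (\<sigma> x y * g y - g x)) / (2 * dg x)"
proof -
  have "(\<Sum>y\<in>Nb x. f y * g y - f x * g x) - g x * (\<Sum>y\<in>Nb x. \<sigma> x y * f y - f x)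
      - f x * (\<Sum>y\<in>Nb x. \<sigma> x y * g y - g x)
      = (\<Sum>y\<in>Nb x. (\<sigma> x y * f y - f x) * (\<sigma> x y * g y - g x))"
  proof -
    have "(\<Sum>y\<in>Nb x. f y * g y - f x * g x) - g x * (\<Sum>y\<in>Nb x. \<sigma> x y * f y - f x)
      - f x * (\<Sum>y\<in>Nb x. \<sigma> x y * g y - g x)
      = (\<Sum>y\<in>Nb x. f y * g y - f x * g x) - (\<Sum>y\<in>Nb x. g x * (\<sigma> x y * f y - f x))
         - (\<Sum>y\<in>Nb x. f x * (\<sigma> x y * g y - g x))"
      by (simp add: sum_distrib_left)
    also have "\<dots> = (\<Sum>y\<in>Nb x. (f y * g y - f x * g x) - g x * (\<sigma> x y * f y - f x) - f x * (\<sigma> x y * g y - g x))"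
      by (simp add: sum_subtractf)
    also have "\<dots> = (\<Sum>y\<in>Nb x. (\<sigma> x y * f y - f x) * (\<sigma> x y * g y - g x))"
    proof (intro sum.cong refl)
      fix y assume "y \<in> Nb x"
      hence s: "\<sigma> x y * \<sigma> x y = 1" using sig_sq Nb_iff by auto
      have "(\<sigma> x y * f y - f x) * (\<sigma> x y * g y - g x)
          = (\<sigma> x y * \<sigma> x y) * f y * g y - \<sigma> x y * f y * g x - \<sigma> x y * f x * g y + f x * g x"
        by (simp add: algebra_simps)
      thus "(f y * g y - f x * g x) - g x * (\<sigma> x y * f y - f x) - f x * (\<sigma> x y * g y - g x)
          = (\<sigma> x y * f y - f x) * (\<sigma> x y * g y - g x)" using s by (simp add: algebra_simps)
    qed
    finally show ?thesis .
  qed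
  moreover have "\<And>d a b c e h. (1/2::real) * (a/d - b*(c/d) - e*(h/d)) = (a - b * c - e * h)/(2*d)"
    by (case_tac "d = 0") (simp_all add: field_simps)
  ultimately show ?thesis unfolding sGamma_def lap_eq slap_eq by metis
qed

lemma Gam_sq: "sGamma V adj \<sigma> f f x = (\<Sum>y\<in>Nb x. (f x - \<sigma> x y * f y)^2) / (2 * dg x)"
  unfolding Gam_eq by (simp add: power2_eq_square algebra_simps)

lemma Gam_nonneg: "sGamma V adj \<sigma> f f x \<ge> 0"
  unfolding Gam_sq by (intro divide_nonneg_nonneg sum_nonneg) auto

lemma Gam_sum: "x \<in> V \<Longrightarrow> (\<Sum>y\<in>Nb x. (f x - \<sigma> x y * f y)^2) = 2 * dg x * sGamma V adj \<sigma> f f x"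
  unfolding Gam_sq using dg_pos[of x] by simp

lemma lap_lin: "lap V adj (\<lambda>z. f z + k * g z) x = lap V adj f x + k * lap V adj g x"
proof -
  have "(\<Sum>y\<in>Nb x. f y + k * g y - (f x + k * g x)) = (\<Sum>y\<in>Nb x. f y - f x) + k * (\<Sum>y\<in>Nb x. g y - g x)"
    by (simp add: sum.distrib sum_distrib_left algebra_simps sum_subtractf)
  thus ?thesis unfolding lap_eq by (simp add: add_divide_distrib)
qed

definition ip :: "('a \<Rightarrow> real) \<Rightarrow> ('a \<Rightarrow> real) \<Rightarrow> real" where
  "ip f g = (\<Sum>x\<in>V. dg x * f x * g x)"

definition Qf :: "('a \<Rightarrow> real) \<Rightarrow> ('a \<Rightarrow> real) \<Rightarrow> real" where
  "Qf f g = (\<Sum>x\<in>V. \<Sum>y\<in>Nb x. (f x - \<sigma> x y * f y) * (g x - \<sigma> x y * g y))"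

lemma ip_slap: "ip g (slap V adj \<sigma> f) = (\<Sum>x\<in>V. g x * (\<Sum>y\<in>Nb x. \<sigma> x y * f y - f x))"
  unfolding ip_def slap_eq
proof (intro sum.cong refl)
  fix x assume "x \<in> V"
  thus "dg x * g x * ((\<Sum>y\<in>Nb x. \<sigma> x y * f y - f x) / dg x) = g x * (\<Sum>y\<in>Nb x. \<sigma> x y * f y - f x)"
    using dg_pos[of x] by (simp add: field_simps)
qed

lemma Qf_eq: "Qf f g = 2 * (\<Sum>x\<in>V. g x * (\<Sum>y\<in>Nb x. f x - \<sigma> x y * f y))"
proof -
  have A: "Qf f g = (\<Sum>x\<in>V. \<Sum>y\<in>Nb x. (f x - \<sigma> x y * f y) * g x)
     - (\<Sum>x\<in>V. \<Sum>y\<in>Nb x. (f x - \<sigma> x y * f y) * (\<sigma> x y * g y))"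
    unfolding Qf_def by (simp add: sum_subtractf[symmetric] algebra_simps)
  have "(\<Sum>x\<in>V. \<Sum>y\<in>Nb x. (f x - \<sigma> x y * f y) * (\<sigma> x y * g y))
      = (\<Sum>x\<in>V. \<Sum>y\<in>Nb x. (f y - \<sigma> y x * f x) * (\<sigma> y x * g x))"
    by (rule swap)
  also have "\<dots> = (\<Sum>x\<in>V. \<Sum>y\<in>Nb x. - ((f x - \<sigma> x y * f y) * g x))"
  proof (intro sum.cong refl)
    fix x y assume "y \<in> Nb x"
    hence a: "adj x y" using Nb_iff by auto
    have "\<sigma> y x = \<sigma> x y" using sig_sym[OF a] by simp
    moreover have "\<sigma> x y * \<sigma> x y = 1" using sig_sq[OF a] .
    ultimately show "(f y - \<sigma> y x * f x) * (\<sigma> y x * g x) = - ((f x - \<sigma> x y * f y) * g x)"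
      by (simp add: algebra_simps)
  qed
  also have "\<dots> = - (\<Sum>x\<in>V. \<Sum>y\<in>Nb x. (f x - \<sigma> x y * f y) * g x)"
    by (simp add: sum_negf)
  finally have Y: "(\<Sum>x\<in>V. \<Sum>y\<in>Nb x. (f x - \<sigma> x y * f y) * (\<sigma> x y * g y))
     = - (\<Sum>x\<in>V. \<Sum>y\<in>Nb x. (f x - \<sigma> x y * f y) * g x)" .
  have X: "(\<Sum>x\<in>V. \<Sum>y\<in>Nb x. (f x - \<sigma> x y * f y) * g x) = (\<Sum>x\<in>V. g x * (\<Sum>y\<in>Nb x. f x - \<sigma> x y * f y))"
    by (simp add: sum_distrib_left mult.commute)
  show ?thesis unfolding A Y X by simp
qed

lemma Qf_sym: "Qf f g = Qf g f" unfolding Qf_def by (simp add: mult.commute)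

lemma Qf_nonneg: "Qf f f \<ge> 0" unfolding Qf_def by (intro sum_nonneg) auto

lemma ip_slap_Qf: "ip g (slap V adj \<sigma> f) = - Qf f g / 2"
proof -
  have e: "\<And>x. (\<Sum>y\<in>Nb x. \<sigma> x y * f y - f x) = - (\<Sum>y\<in>Nb x. f x - \<sigma> x y * f y)"
    by (simp add: sum_negf[symmetric])
  show ?thesis unfolding ip_slap Qf_eq e by (simp add: sum_negf)
qed

end

inductive swalk :: "('a \<Rightarrow> 'a \<Rightarrow> bool) \<Rightarrow> ('a \<Rightarrow> 'a \<Rightarrow> real) \<Rightarrow> 'a \<Rightarrow> nat \<Rightarrow> 'a \<Rightarrow> real \<Rightarrow> bool"
  for adj \<sigma> where
  sw0: "swalk adj \<sigma> x 0 x 1"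
| swS: "swalk adj \<sigma> x n y s \<Longrightarrow> adj y z \<Longrightarrow> swalk adj \<sigma> x (Suc n) z (s * \<sigma> y z)"

lemma swalk_0E: "swalk adj \<sigma> x 0 y s \<Longrightarrow> y = x \<and> s = 1"
  by (erule swalk.cases) auto

lemma swalk_SucE: "swalk adj \<sigma> x (Suc n) z s' \<Longrightarrow> \<exists>y s. swalk adj \<sigma> x n y s \<and> adj y z \<and> s' = s * \<sigma> y z"
  by (erule swalk.cases) auto

definition bb :: "real \<Rightarrow> nat \<Rightarrow> real" where
  "bb G n = real (n div 2) * sqrt (2 * G) + real (n mod 2) * sqrt G"

lemma bb_Suc: assumes G: "0 \<le> G" shows "bb G n \<le> bb G (Suc n)"
proof (cases "even n")
  case True
  then show ?thesis unfolding bb_def using G by (simp add: even_Suc_div_two)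
next
  case False
  have "sqrt G \<le> sqrt (2 * G)" using G by simp
  with False show ?thesis unfolding bb_def by (simp add: odd_Suc_div_two odd_iff_mod_2_eq_one algebra_simps)
qed

lemma bb_mono: assumes "0 \<le> G" "n \<le> m" shows "bb G n \<le> bb G m"
  using assms(2)
proof (induction m rule: dec_induct)
  case base then show ?case by simp
next
  case (step m) then show ?case using bb_Suc[of G m] assms(1) by simp
qed
 
lemma bb_SS: "bb G (Suc (Suc n)) = bb G n + sqrt (2 * G)"
  unfolding bb_def by (simp add: algebra_simps)

lemma bb_sq: assumes G: "0 \<le> G" shows "(bb G m)^2 \<le> real m * real_of_int \<lceil>real m / 2\<rceil> * G"
proof -
  define g where "g = sqrt G"
  have g: "g \<ge> 0" "G = g^2" unfolding g_def using G by auto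
  have s2: "sqrt (2 * G) = sqrt 2 * g" unfolding g_def by (simp add: real_sqrt_mult)
  show ?thesis
  proof (cases "even m")
    case True
    then obtain k where m: "m = 2 * k" by blast
    have c: "real_of_int \<lceil>real m / 2\<rceil> = real k" unfolding m by simp
    have "(bb G m)^2 = 2 * real k^2 * g^2" unfolding bb_def s2 m by (simp add: power_mult_distrib algebra_simps)
    also have "\<dots> = real m * real_of_int \<lceil>real m / 2\<rceil> * G" unfolding c using m g by (simp add: power2_eq_square)
    finally show ?thesis by simp
  next
    case False
    then obtain k where m: "m = 2 * k + 1" using oddE by blast
    have "real m / 2 > real k" unfolding m by simp
    hence "\<lceil>real m / 2\<rceil> > int k" by (simp add: less_ceiling_iff)
    hence c: "real_of_int \<lceil>real m / 2\<rceil> \<ge> real k + 1" by linarith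
    have "m div 2 = k" "m mod 2 = 1" unfolding m by auto
    hence b: "bb G m = real k * sqrt 2 * g + g" unfolding bb_def s2 g_def by simp
    have sq2: "sqrt 2 \<le> 3/2" by (rule real_le_lsqrt) (auto simp: power2_eq_square)
    have sq2': "sqrt 2 * sqrt 2 = 2" by simp
    have "(bb G m)^2 = g^2 * (2 * real k^2 + 2 * sqrt 2 * real k + 1)"
      unfolding b by (simp add: power2_eq_square algebra_simps sq2')
    also have "\<dots> \<le> g^2 * ((2 * real k + 1) * (real k + 1))"
    proof (intro mult_left_mono)
      have "real k * (2 * sqrt 2) \<le> real k * 3" using sq2 by (intro mult_left_mono) auto
      thus "2 * real k^2 + 2 * sqrt 2 * real k + 1 \<le> (2 * real k + 1) * (real k + 1)"
        by (simp add: algebra_simps power2_eq_square)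
    qed simp
    also have "\<dots> \<le> g^2 * (real m * real_of_int \<lceil>real m / 2\<rceil>)"
    proof (intro mult_left_mono)
      show "(2 * real k + 1) * (real k + 1) \<le> real m * real_of_int \<lceil>real m / 2\<rceil>"
        using mult_left_mono[OF c, of "real m"] unfolding m by (simp add: algebra_simps)
    qed simp
    finally show ?thesis using g by (simp add: algebra_simps)
  qed
qed

context sgr
begin

lemma sw_pm: "swalk adj \<sigma> x n y s \<Longrightarrow> s = 1 \<or> s = -1"
  by (induction rule: swalk.induct) (auto dest: sig_pm)

lemma sw_V: "swalk adj \<sigma> x n y s \<Longrightarrow> x \<in> V \<Longrightarrow> y \<in> V"
  by (induction rule: swalk.induct) (auto dest: adjV)

lemma relpow_sw: "(adj ^^ n) x y \<Longrightarrow> \<exists>s. swalk adj \<sigma> x n y s"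
proof (induction n arbitrary: y)
  case 0 then show ?case by (auto intro: sw0)
next
  case (Suc n)
  from Suc.prems obtain w where "(adj ^^ n) x w" "adj w y" by (rule relpowp_Suc_E)
  then show ?case using Suc.IH by (blast intro: swS)
qed

lemma walk_bound:
  assumes G: "\<forall>w\<in>V. (\<Sum>y\<in>Nb w. (f w - \<sigma> w y * f y)^2) \<le> G" and x: "x \<in> V"
  shows "swalk adj \<sigma> x n z s \<Longrightarrow> \<bar>f x - s * f z\<bar> \<le> bb G n"
proof (induction n arbitrary: z s rule: less_induct)
  case (less n)
  have G0: "0 \<le> G"
  proof -
    have "0 \<le> (\<Sum>y\<in>Nb x. (f x - \<sigma> x y * f y)^2)" by (rule sum_nonneg) simp
    thus ?thesis using G x by fastforce
  qed
  have one: "\<bar>f w - \<sigma> w y * f y\<bar> \<le> sqrt G" if "adj w y" for w y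
  proof -
    have w: "w \<in> V" "y \<in> Nb w" using that adjV Nb_iff by auto
    have "(f w - \<sigma> w y * f y)^2 \<le> (\<Sum>y\<in>Nb w. (f w - \<sigma> w y * f y)^2)"
      by (rule member_le_sum) (use w Nb_fin in auto)
    also have "\<dots> \<le> G" using G w by auto
    finally show ?thesis using real_le_rsqrt[of "\<bar>f w - \<sigma> w y * f y\<bar>" G] by simp
  qed
  consider "n = 0" | "n = 1" | m where "n = Suc (Suc m)"
    by (cases n; cases "n - 1") auto
  then show ?case
  proof cases
    case 1 then show ?thesis using swalk_0E[OF less.prems[unfolded 1]] unfolding bb_def by simp
  next
    case 2
    then obtain y s0 where h: "swalk adj \<sigma> x 0 y s0" "adj y z" "s = s0 * \<sigma> y z"
      using swalk_SucE[OF less.prems[unfolded 2 One_nat_def]] by blast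
    from swalk_0E[OF h(1)] have "y = x \<and> s0 = 1" .
    then have "s = \<sigma> x z" "adj x z" using \<open>adj y z\<close> \<open>s = s0 * \<sigma> y z\<close> by auto
    then show ?thesis using one[of x z] 2 unfolding bb_def by simp
  next
    case 3
    obtain w s1 where w: "swalk adj \<sigma> x (Suc m) w s1" "adj w z" "s = s1 * \<sigma> w z"
      using swalk_SucE[OF less.prems[unfolded 3]] by blast
    obtain v s0 where v: "swalk adj \<sigma> x m v s0" "adj v w" "s1 = s0 * \<sigma> v w"
      using swalk_SucE[OF w(1)] by blast
    have IH: "\<bar>f x - s0 * f v\<bar> \<le> bb G m" using less.IH[of m v s0] v 3 by simp
    have s0: "\<bar>s0\<bar> = 1" using sw_pm[OF v(1)] by (elim disjE) simp_all
    have svw: "\<sigma> v w = \<sigma> w v" "\<sigma> v w * \<sigma> v w = 1" by (rule sig_sym[OF v(2)], rule sig_sq[OF v(2)])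
    have step: "\<bar>f v - \<sigma> v w * \<sigma> w z * f z\<bar> \<le> sqrt (2 * G)"
    proof (cases "v = z")
      case True
      then show ?thesis using svw G0 by simp
    next
      case False
      define A where "A = \<bar>f w - \<sigma> w v * f v\<bar>"
      define B where "B = \<bar>f w - \<sigma> w z * f z\<bar>"
      have "f v - \<sigma> v w * \<sigma> w z * f z = - \<sigma> v w * (f w - \<sigma> w v * f v) + \<sigma> v w * (f w - \<sigma> w z * f z)"
        using svw by (simp add: algebra_simps)
      moreover have "\<bar>- \<sigma> v w * (f w - \<sigma> w v * f v) + \<sigma> v w * (f w - \<sigma> w z * f z)\<bar> \<le> A + B"
      proof -
        have "\<bar>- \<sigma> v w * (f w - \<sigma> w v * f v) + \<sigma> v w * (f w - \<sigma> w z * f z)\<bar>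
          \<le> \<bar>- \<sigma> v w * (f w - \<sigma> w v * f v)\<bar> + \<bar>\<sigma> v w * (f w - \<sigma> w z * f z)\<bar>"
          by (rule abs_triangle_ineq)
        also have "\<dots> = A + B" unfolding A_def B_def abs_mult abs_minus_cancel sig_abs[OF v(2)] by simp
        finally show ?thesis .
      qed
      ultimately have "\<bar>f v - \<sigma> v w * \<sigma> w z * f z\<bar> \<le> A + B" by simp
      moreover have "A^2 + B^2 \<le> G"
      proof -
        have sub: "{v, z} \<subseteq> Nb w" using w(2) adj_sym[OF v(2)] Nb_iff by auto
        have "A^2 + B^2 = (\<Sum>y\<in>{v,z}. (f w - \<sigma> w y * f y)^2)"
          using False unfolding A_def B_def by simp
        also have "\<dots> \<le> (\<Sum>y\<in>Nb w. (f w - \<sigma> w y * f y)^2)"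
          by (rule sum_mono2[OF Nb_fin sub]) auto
        also have "\<dots> \<le> G" using G adjV[OF w(2)] by auto
        finally show ?thesis .
      qed
      moreover have "A \<ge> 0" "B \<ge> 0" unfolding A_def B_def by auto
      moreover have "(A + B)^2 \<le> 2 * G"
      proof -
        have "(A + B)^2 \<le> 2 * (A^2 + B^2)" 
        proof -
          have "0 \<le> (A - B)^2" by simp
          thus ?thesis by (simp add: power2_eq_square algebra_simps)
        qed
        moreover have "2 * (A^2 + B^2) \<le> 2 * G" using \<open>A^2 + B^2 \<le> G\<close> by simp
        ultimately show ?thesis by (rule order_trans)
      qed
      ultimately show ?thesis using real_le_rsqrt[of "A + B" "2 * G"] by linarith
    qed
    have "\<bar>f x - s * f z\<bar> \<le> \<bar>f x - s0 * f v\<bar> + \<bar>s0\<bar> * \<bar>f v - \<sigma> v w * \<sigma> w z * f z\<bar>"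
    proof -
      have "f x - s * f z = (f x - s0 * f v) + s0 * (f v - \<sigma> v w * \<sigma> w z * f z)"
        unfolding w(3) v(3) by (simp add: algebra_simps)
      hence "\<bar>f x - s * f z\<bar> \<le> \<bar>f x - s0 * f v\<bar> + \<bar>s0 * (f v - \<sigma> v w * \<sigma> w z * f z)\<bar>"
        using abs_triangle_ineq by simp
      thus ?thesis by (simp add: abs_mult)
    qed
    also have "\<dots> \<le> bb G m + sqrt (2 * G)" using IH step s0 by simp
    finally show ?thesis using 3 bb_SS by simp
  qed
qed


lemma gdist_facts:
  assumes "x \<in> V" "y \<in> V"
  shows "gdist adj x y \<le> diam V adj" "(adj ^^ gdist adj x y) x y"
proof -
  have "adj\<^sup>*\<^sup>* x y" using conn assms unfolding connected_graph_def by auto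
  then obtain n where "(adj ^^ n) x y" using rtranclp_imp_relpowp by metis
  thus "(adj ^^ gdist adj x y) x y" unfolding gdist_def by (rule LeastI)
  have fin: "finite {gdist adj x y | x y. x \<in> V \<and> y \<in> V}"
    using finite_image_set2[of "\<lambda>x. x \<in> V" "\<lambda>y. y \<in> V" "gdist adj"] finV by simp
  show "gdist adj x y \<le> diam V adj" unfolding diam_def
    by (rule Max_ge[OF fin]) (use assms in blast)
qed

lemma bij_rot: assumes "0 < L" shows "bij_betw (\<lambda>i. Suc i mod L) {..<L} {..<L}"
proof -
  have inj: "inj_on (\<lambda>i. Suc i mod L) {..<L}"
  proof (rule inj_onI)
    fix i j assume ij: "i \<in> {..<L}" "j \<in> {..<L}" "Suc i mod L = Suc j mod L"
    show "i = j"
    proof (cases "Suc i = L")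
      case True
      then show ?thesis using ij by (cases "Suc j = L") auto
    next
      case False
      then show ?thesis using ij by (cases "Suc j = L") auto
    qed
  qed
  have "(\<lambda>i. Suc i mod L) ` {..<L} \<subseteq> {..<L}" using assms by auto
  hence "(\<lambda>i. Suc i mod L) ` {..<L} = {..<L}" using endo_inj_surj[OF _ _ inj] by simp
  thus ?thesis using inj unfolding bij_betw_def by simp
qed

lemma switch_balanced:
  assumes "\<And>y z. adj y z \<Longrightarrow> \<sigma> y z = \<tau> y * \<tau> z" and "\<And>y. y \<in> V \<Longrightarrow> \<tau> y * \<tau> y = 1"
  shows "balanced V adj \<sigma>"
  unfolding balanced_def
proof (intro allI impI)
  fix c assume c: "is_cycle V adj c"
  define L where "L = length c"
  have L: "L \<ge> 3" "set c \<subseteq> V" and ad: "\<And>i. i < L \<Longrightarrow> adj (c ! i) (c ! ((i + 1) mod L))"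
    using c unfolding is_cycle_def L_def by auto
  have "cycle_sign \<sigma> c = (\<Prod>i<L. \<tau> (c ! i) * \<tau> (c ! (Suc i mod L)))"
    unfolding cycle_sign_def L_def[symmetric] using ad assms(1) by (intro prod.cong refl) simp
  also have "\<dots> = (\<Prod>i<L. \<tau> (c ! i)) * (\<Prod>i<L. \<tau> (c ! (Suc i mod L)))"
    by (rule prod.distrib)
  also have "(\<Prod>i<L. \<tau> (c ! (Suc i mod L))) = (\<Prod>i<L. \<tau> (c ! i))"
    using prod.reindex_bij_betw[OF bij_rot, of L "\<lambda>i. \<tau> (c ! i)"] L by simp
  also have "(\<Prod>i<L. \<tau> (c ! i)) * (\<Prod>i<L. \<tau> (c ! i)) = (\<Prod>i<L. \<tau> (c ! i) * \<tau> (c ! i))"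
    by (rule prod.distrib[symmetric])
  also have "\<dots> = 1"
  proof (rule prod.neutral, rule ballI)
    fix i assume "i \<in> {..<L}"
    hence "c ! i \<in> V" using L unfolding L_def by auto
    thus "\<tau> (c ! i) * \<tau> (c ! i) = 1" using assms(2) by blast
  qed
  finally show "cycle_sign \<sigma> c = 1" .
qed

lemma bad_walk:
  assumes x0: "x0 \<in> V" and f0: "f x0 \<noteq> 0"
  shows "\<exists>n y s. n \<le> diam V adj + 1 \<and> swalk adj \<sigma> x0 n y s \<and> s * f y * f x0 \<le> 0"
proof (rule ccontr)
  assume "\<not> ?thesis"
  hence H: "\<And>n y s. n \<le> diam V adj + 1 \<Longrightarrow> swalk adj \<sigma> x0 n y s \<Longrightarrow> s * f y * f x0 > 0"
    by (meson not_le)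
  define \<tau> where "\<tau> y = sgn (f y * f x0)" for y
  have sw: "s = \<tau> y" if "n \<le> diam V adj + 1" "swalk adj \<sigma> x0 n y s" for n y s
  proof -
    have p: "s * f y * f x0 > 0" using H that by blast
    from sw_pm[OF that(2)] show ?thesis
    proof
      assume "s = 1" thus ?thesis using p unfolding \<tau>_def by simp
    next
      assume s1: "s = -1"
      hence "f y * f x0 < 0" using p by (simp add: mult.assoc)
      thus ?thesis using s1 unfolding \<tau>_def by (simp add: sgn_if) (metis mult_zero_left mult_zero_right order_less_irrefl)
    qed
  qed
  have reach: "\<exists>k s. k \<le> diam V adj \<and> swalk adj \<sigma> x0 k y s" if yV: "y \<in> V" for y
  proof -
    obtain s where "swalk adj \<sigma> x0 (gdist adj x0 y) y s" using relpow_sw[OF gdist_facts(2)[OF x0 yV]] by blast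
    thus ?thesis using gdist_facts(1)[OF x0 yV] by blast
  qed
  have tpm: "\<tau> y * \<tau> y = 1" if yV: "y \<in> V" for y
  proof -
    obtain k s where ks: "k \<le> diam V adj" "swalk adj \<sigma> x0 k y s" using reach[OF yV] by blast
    have "s = \<tau> y" using sw[of k y s] ks by simp
    moreover have "s = 1 \<or> s = -1" by (rule sw_pm[OF ks(2)])
    ultimately show ?thesis by auto
  qed
  have edge: "\<sigma> y z = \<tau> y * \<tau> z" if a: "adj y z" for y z
  proof -
    have y: "y \<in> V" using adjV[OF a] by blast
    obtain k s where ks: "k \<le> diam V adj" "swalk adj \<sigma> x0 k y s" using reach[OF y] by blast
    have "s = \<tau> y" using sw[of k y s] ks by simp
    moreover have "s * \<sigma> y z = \<tau> z" using sw[of "Suc k" z "s * \<sigma> y z"] swS[OF ks(2) a] ks(1) by simp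
    ultimately have "\<tau> y * (\<tau> y * \<sigma> y z) = \<tau> y * \<tau> z" by simp
    thus ?thesis using tpm[OF y] by (simp add: mult.assoc[symmetric])
  qed
  have "balanced V adj \<sigma>" by (rule switch_balanced[OF edge tpm])
  thus False using unb by simp
qed

lemma path_main:
  assumes x0: "x0 \<in> V" and f0: "f x0 \<noteq> 0"
    and G: "\<forall>w\<in>V. (\<Sum>y\<in>Nb w. (f w - \<sigma> w y * f y)^2) \<le> G"
  shows "(f x0)^2 \<le> real (diam V adj + 1) * real_of_int \<lceil>real (diam V adj + 1) / 2\<rceil> * G"
proof -
  obtain n y s where nys: "n \<le> diam V adj + 1" "swalk adj \<sigma> x0 n y s" "s * f y * f x0 \<le> 0"
    using bad_walk[of x0 f, OF x0 f0] by blast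
  have G0: "0 \<le> G"
  proof -
    have "0 \<le> (\<Sum>y\<in>Nb x0. (f x0 - \<sigma> x0 y * f y)^2)" by (rule sum_nonneg) simp
    thus ?thesis using G x0 by fastforce
  qed
  have ss: "s * s = 1" using sw_pm[OF nys(2)] by auto
  have "(f x0)^2 \<le> (f x0 - s * f y)^2"
  proof -
    have "(f x0 - s * f y)^2 = (f x0)^2 - 2 * (s * f y * f x0) + (s * s) * (f y)^2"
      by (simp add: power2_eq_square algebra_simps)
    also have "\<dots> = (f x0)^2 - 2 * (s * f y * f x0) + (f y)^2" using ss by simp
    finally have e: "(f x0 - s * f y)^2 = (f x0)^2 - 2 * (s * f y * f x0) + (f y)^2" .
    have "0 \<le> (f y)^2" by simp
    thus ?thesis unfolding e using nys(3) by linarith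
  qed
  also have "\<dots> = \<bar>f x0 - s * f y\<bar>^2" by simp
  also have "\<dots> \<le> (bb G (diam V adj + 1))^2"
  proof (rule power_mono)
    show "\<bar>f x0 - s * f y\<bar> \<le> bb G (diam V adj + 1)"
      using walk_bound[OF G x0 nys(2)] bb_mono[OF G0 nys(1)] by linarith
  qed simp
  also have "\<dots> \<le> real (diam V adj + 1) * real_of_int \<lceil>real (diam V adj + 1) / 2\<rceil> * G"
    by (rule bb_sq[OF G0])
  finally show ?thesis .
qed

end

lemma quad_zero:
  fixes B C :: real
  assumes "\<And>e. 0 \<le> 2 * e * B + e^2 * C"
  shows "B = 0"
proof (rule ccontr)
  assume B: "B \<noteq> 0"
  define a where "a = \<bar>C\<bar> + 1"
  have a: "a > 0" "C \<le> a - 1" unfolding a_def by auto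
  have "0 \<le> 2 * (- B / a) * B + (- B / a)^2 * C" by (rule assms)
  hence "0 \<le> a^2 * (2 * (- B / a) * B + (- B / a)^2 * C)" using a by simp
  also have "\<dots> = B^2 * (C - 2 * a)" using a by (simp add: field_simps power2_eq_square)
  finally have "0 \<le> B^2 * (C - 2 * a)" .
  have "B^2 > 0" using B by simp
  moreover have "C - 2 * a < 0" using a by simp
  ultimately have "B^2 * (C - 2 * a) < 0" by (intro mult_pos_neg)
  thus False using \<open>0 \<le> B^2 * (C - 2 * a)\<close> by linarith
qed

context sgr
begin

lemma Nb_V: "y \<in> Nb x \<Longrightarrow> y \<in> V" using Nb_sub by blast

lemma ip_cong: "(\<And>x. x \<in> V \<Longrightarrow> f x = f' x) \<Longrightarrow> (\<And>x. x \<in> V \<Longrightarrow> g x = g' x) \<Longrightarrow> ip f g = ip f' g'"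
  unfolding ip_def by (intro sum.cong refl) auto

lemma Qf_cong: "(\<And>x. x \<in> V \<Longrightarrow> f x = f' x) \<Longrightarrow> (\<And>x. x \<in> V \<Longrightarrow> g x = g' x) \<Longrightarrow> Qf f g = Qf f' g'"
  unfolding Qf_def by (intro sum.cong refl) (auto dest: Nb_V)

lemma ip_nonneg: "ip f f \<ge> 0"
  unfolding ip_def by (intro sum_nonneg) (simp add: mult.assoc)

lemma ip_add: "ip (\<lambda>x. f x + e * g x) (\<lambda>x. f x + e * g x) = ip f f + 2 * e * ip f g + e^2 * ip g g"
  unfolding ip_def by (simp add: sum.distrib sum_distrib_left algebra_simps power2_eq_square)

lemma Qf_add: "Qf (\<lambda>x. f x + e * g x) (\<lambda>x. f x + e * g x) = Qf f f + 2 * e * Qf f g + e^2 * Qf g g"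
proof -
  have t: "(f x + e * g x - \<sigma> x y * (f y + e * g y)) * (f x + e * g x - \<sigma> x y * (f y + e * g y))
     = (f x - \<sigma> x y * f y) * (f x - \<sigma> x y * f y) + 2 * e * ((f x - \<sigma> x y * f y) * (g x - \<sigma> x y * g y))
       + e^2 * ((g x - \<sigma> x y * g y) * (g x - \<sigma> x y * g y))" for x y
    by (simp add: algebra_simps power2_eq_square)
  show ?thesis unfolding Qf_def t by (simp add: sum.distrib sum_distrib_left)
qed

lemma ip_scale: "ip (\<lambda>x. a * f x) (\<lambda>x. a * f x) = a^2 * ip f f"
  unfolding ip_def by (simp add: sum_distrib_left algebra_simps power2_eq_square)

lemma Qf_scale: "Qf (\<lambda>x. a * f x) (\<lambda>x. a * f x) = a^2 * Qf f f"
  unfolding Qf_def by (simp add: sum_distrib_left algebra_simps power2_eq_square)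

lemma ip_delta: "x \<in> V \<Longrightarrow> ip (\<lambda>z. if z = x then 1 else 0) h = dg x * h x"
proof -
  assume x: "x \<in> V"
  have "ip (\<lambda>z. if z = x then 1 else 0) h = (\<Sum>z\<in>V. if z = x then dg x * h x else 0)"
    unfolding ip_def by (intro sum.cong refl) auto
  also have "\<dots> = dg x * h x" using x finV by simp
  finally show ?thesis .
qed

lemma slap_out: "x \<notin> V \<Longrightarrow> slap V adj \<sigma> f x = 0"
proof -
  assume "x \<notin> V"
  hence "Nb x = {}" using Nb_iff adjV by blast
  thus ?thesis unfolding slap_eq by simp
qed

lemma Qf_delta: "x \<in> V \<Longrightarrow> Qf f (\<lambda>z. if z = x then 1 else 0) = - 2 * dg x * slap V adj \<sigma> f x"
proof -
  assume x: "x \<in> V"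
  have "Qf f (\<lambda>z. if z = x then 1 else 0) = - 2 * ip (\<lambda>z. if z = x then 1 else 0) (slap V adj \<sigma> f)"
    using ip_slap_Qf[of "\<lambda>z. if z = x then 1 else 0" f] by simp
  thus ?thesis using ip_delta[OF x] by simp
qed

abbreviation "PT \<equiv> product_topology (\<lambda>_. euclideanreal) V"

lemma cont_ip: "continuous_map PT euclideanreal (\<lambda>f. ip f f)"
  unfolding ip_def using finV by (intro continuous_intros continuous_map_product_projection) auto

lemma cont_Qf: "continuous_map PT euclideanreal (\<lambda>f. Qf f f)"
  unfolding Qf_def using finV Nb_fin Nb_sub by (intro continuous_intros continuous_map_product_projection) auto

lemma eigen_exists:
  "\<exists>\<phi> \<mu>. (\<forall>x. x \<notin> V \<longrightarrow> \<phi> x = 0) \<and> ip \<phi> \<phi> = 1 \<and> Qf \<phi> \<phi> = \<mu> \<and> (\<forall>g. Qf g g \<ge> \<mu> * ip g g)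
      \<and> (\<forall>x. slap V adj \<sigma> \<phi> x = - (\<mu> / 2) * \<phi> x)"
proof -
  define K where "K = PiE V (\<lambda>_. {-1..(1::real)})"
  define C where "C = {f \<in> topspace PT. ip f f \<in> {1}}"
  have Kc: "compactin PT K" unfolding K_def by (simp add: compactin_PiE)
  have Ccl: "closedin PT C" unfolding C_def
    by (rule closedin_continuous_map_preimage[OF cont_ip]) (simp add: closed_closedin[symmetric])
  have CK: "C \<subseteq> K"
  proof
    fix f assume f: "f \<in> C"
    have "f x \<in> {-1..1}" if x: "x \<in> V" for x
    proof -
      have "dg x * f x * f x \<le> ip f f" unfolding ip_def
        by (rule member_le_sum[OF x _ finV]) (simp add: mult.assoc)
      hence "dg x * (f x)^2 \<le> 1" using f unfolding C_def by (simp add: power2_eq_square mult.assoc)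
      moreover have "dg x \<ge> 1" using deg_pos[OF x] by simp
      ultimately have "(f x)^2 \<le> 1" by (smt (verit) mult_le_cancel_right1 zero_le_power2)
      hence "\<bar>f x\<bar> \<le> 1" by (simp add: abs_square_le_1)
      thus ?thesis by (simp add: abs_le_iff)
    qed
    thus "f \<in> K" using f unfolding C_def K_def by auto
  qed
  have Cc: "compactin PT C" by (rule closed_compactin[OF Kc CK Ccl])
  have QC: "compact ((\<lambda>f. Qf f f) ` C)"
    using image_compactin[OF Cc cont_Qf] by simp
  obtain x1 where x1: "x1 \<in> V" using Vne by blast
  define e where "e = restrict (\<lambda>x. if x = x1 then 1 / sqrt (dg x1) else 0) V"
  have "ip e e = (\<Sum>x\<in>V. if x = x1 then 1 else 0)"
    unfolding ip_def e_def using dg_pos[OF x1] by (intro sum.cong refl) auto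
  also have "\<dots> = 1" using x1 finV by simp
  finally have "e \<in> C" unfolding C_def e_def by simp
  hence Cne: "(\<lambda>f. Qf f f) ` C \<noteq> {}" by blast
  obtain q where q: "q \<in> (\<lambda>f. Qf f f) ` C" "\<forall>y\<in>(\<lambda>f. Qf f f) ` C. q \<le> y"
    using compact_attains_inf[OF QC Cne] by blast
  obtain \<phi>0 where \<phi>0: "\<phi>0 \<in> C" "q = Qf \<phi>0 \<phi>0" using q(1) by blast
  define \<phi> where "\<phi> x = (if x \<in> V then \<phi>0 x else 0)" for x
  have out: "\<forall>x. x \<notin> V \<longrightarrow> \<phi> x = 0" unfolding \<phi>_def by simp
  have ip1: "ip \<phi> \<phi> = 1" using \<phi>0(1) ip_cong[of \<phi> \<phi>0 \<phi> \<phi>0] unfolding C_def \<phi>_def by simp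
  have Qq: "Qf \<phi> \<phi> = q" using \<phi>0(2) Qf_cong[of \<phi> \<phi>0 \<phi> \<phi>0] unfolding \<phi>_def by simp
  have ray: "Qf g g \<ge> q * ip g g" for g
  proof (cases "ip g g = 0")
    case True thus ?thesis using Qf_nonneg[of g] by simp
  next
    case False
    hence pos: "ip g g > 0" using ip_nonneg[of g] by simp
    define c where "c = sqrt (ip g g)"
    have c: "c > 0" "c^2 = ip g g" unfolding c_def using pos by auto
    define h where "h = restrict (\<lambda>x. (1 / c) * g x) V"
    have "ip h h = ip (\<lambda>x. (1 / c) * g x) (\<lambda>x. (1 / c) * g x)"
      unfolding h_def by (rule ip_cong) auto
    also have "\<dots> = 1" unfolding ip_scale using c pos by (simp add: power_divide)
    finally have "h \<in> C" unfolding C_def h_def by simp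
    hence "q \<le> Qf h h" using q(2) by blast
    also have "Qf h h = Qf (\<lambda>x. (1 / c) * g x) (\<lambda>x. (1 / c) * g x)"
      unfolding h_def by (rule Qf_cong) auto
    also have "\<dots> = Qf g g / c^2" unfolding Qf_scale by (simp add: power_divide)
    finally have "q \<le> Qf g g / c^2" .
    thus ?thesis using c pos by (simp add: field_simps)
  qed
  have eig: "slap V adj \<sigma> \<phi> x = - (q / 2) * \<phi> x" for x
  proof (cases "x \<in> V")
    case False thus ?thesis using slap_out out by simp
  next
    case True
    define g where "g = (\<lambda>z. if z = x then 1 else (0::real))"
    have "0 \<le> 2 * e * (Qf \<phi> g - q * ip \<phi> g) + e^2 * (Qf g g - q * ip g g)" for e
    proof -
      have "q * ip (\<lambda>z. \<phi> z + e * g z) (\<lambda>z. \<phi> z + e * g z) \<le> Qf (\<lambda>z. \<phi> z + e * g z) (\<lambda>z. \<phi> z + e * g z)"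
        by (rule ray)
      thus ?thesis unfolding ip_add Qf_add ip1 Qq by (simp add: algebra_simps)
    qed
    hence "Qf \<phi> g - q * ip \<phi> g = 0" by (rule quad_zero)
    moreover have "Qf \<phi> g = - 2 * dg x * slap V adj \<sigma> \<phi> x" unfolding g_def by (rule Qf_delta[OF True])
    moreover have "ip \<phi> g = dg x * \<phi> x"
      using ip_delta[OF True, of \<phi>] unfolding g_def ip_def by (simp add: mult.commute mult.left_commute)
    ultimately have "dg x * (2 * slap V adj \<sigma> \<phi> x + q * \<phi> x) = 0" by (simp add: algebra_simps)
    hence "2 * slap V adj \<sigma> \<phi> x + q * \<phi> x = 0" using dg_pos[OF True] by simp
    thus ?thesis by (simp add: field_simps)
  qed
  show ?thesis using out ip1 Qq ray eig by blast
qed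

end

lemma sN_facts:
  assumes "N > (1::ereal)"
  shows "invN N \<ge> 0" "sqrtN N > 0" "(sqrtN N)^2 = 1 - invN N"
proof -
  have "invN N \<ge> 0 \<and> sqrtN N > 0 \<and> (sqrtN N)^2 = 1 - invN N"
  proof (cases N)
    case (real r)
    hence r: "r > 1" using assms by simp
    hence "(r - 1) / r > 0" by simp
    moreover have "(r - 1) / r = 1 - 1 / r" using r by (simp add: field_simps)
    ultimately show ?thesis using r unfolding invN_def sqrtN_def real by simp
  next
    case PInf thus ?thesis unfolding invN_def sqrtN_def by simp
  next
    case MInf thus ?thesis using assms by simp
  qed
  thus "invN N \<ge> 0" "sqrtN N > 0" "(sqrtN N)^2 = 1 - invN N" by auto
qed

context sgr
begin

lemma CD_Gam2: "CD V adj \<sigma> 0 N \<Longrightarrow> x \<in> V \<Longrightarrow> sGamma2 V adj \<sigma> f f x \<ge> invN N * (slap V adj \<sigma> f x)^2"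
  unfolding CD_def by simp

lemma Gam_scale2: "sGamma V adj \<sigma> f (\<lambda>z. a * g z) x = a * sGamma V adj \<sigma> f g x"
  unfolding Gam_eq by (simp add: sum_distrib_left algebra_simps)

lemma lap_mm: "lap V adj (\<lambda>z. f z * f z) x = 2 * sGamma V adj \<sigma> f f x + 2 * f x * slap V adj \<sigma> f x"
  unfolding sGamma_def by (simp add: field_simps)

lemma lap_Gam: "lap V adj (sGamma V adj \<sigma> f f) x = 2 * sGamma2 V adj \<sigma> f f x + 2 * sGamma V adj \<sigma> f (slap V adj \<sigma> f) x"
  unfolding sGamma2_def by (simp add: field_simps)

lemma max_V: fixes K :: "'a \<Rightarrow> real" shows "\<exists>x0\<in>V. \<forall>x\<in>V. K x \<le> K x0"
proof -
  have "Max (K ` V) \<in> K ` V" using finV Vne by simp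
  then obtain x0 where x0: "x0 \<in> V" "K x0 = Max (K ` V)" by auto
  have "\<forall>x\<in>V. K x \<le> K x0" unfolding x0(2) using finV by simp
  thus ?thesis using x0(1) by blast
qed

lemma lap_max: assumes "x0 \<in> V" "\<forall>x\<in>V. K x \<le> K x0" shows "lap V adj K x0 \<le> 0"
  unfolding lap_eq using assms Nb_V by (intro divide_nonpos_nonneg sum_nonpos) auto

lemma static_bound:
  assumes CD: "CD V adj \<sigma> 0 N" and N: "N > 1"
    and eig: "\<And>x. slap V adj \<sigma> \<phi> x = - lam * \<phi> x" and lam: "lam > 0"
    and M2: "\<forall>x\<in>V. (\<phi> x)^2 \<le> M2" and w: "w \<in> V"
  shows "sGamma V adj \<sigma> \<phi> \<phi> w \<le> 2 * (1 + sqrtN N) * lam * M2"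
proof -
  define s where "s = sqrtN N"
  define iN where "iN = invN N"
  have s: "s > 0" "iN = 1 - s^2" unfolding s_def iN_def using sN_facts[OF N] by auto
  define c where "c = 1 + s"
  define K where "K z = sGamma V adj \<sigma> \<phi> \<phi> z + (c * lam) * (\<phi> z * \<phi> z)" for z
  obtain x0 where x0: "x0 \<in> V" "\<forall>x\<in>V. K x \<le> K x0" using max_V[of K] by blast
  have sl: "slap V adj \<sigma> \<phi> = (\<lambda>z. - lam * \<phi> z)" using eig by auto
  define G where "G = sGamma V adj \<sigma> \<phi> \<phi> x0"
  define P where "P = \<phi> x0 * \<phi> x0"
  have "lap V adj K x0 = lap V adj (sGamma V adj \<sigma> \<phi> \<phi>) x0 + (c * lam) * lap V adj (\<lambda>z. \<phi> z * \<phi> z) x0"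
    unfolding K_def by (rule lap_lin)
  also have "lap V adj (sGamma V adj \<sigma> \<phi> \<phi>) x0 = 2 * sGamma2 V adj \<sigma> \<phi> \<phi> x0 - 2 * lam * G"
    unfolding lap_Gam sl Gam_scale2 G_def by simp
  also have "lap V adj (\<lambda>z. \<phi> z * \<phi> z) x0 = 2 * G - 2 * lam * P"
    unfolding lap_mm G_def P_def eig by simp
  finally have L: "lap V adj K x0 = 2 * sGamma2 V adj \<sigma> \<phi> \<phi> x0 - 2 * lam * G + c * lam * (2 * G - 2 * lam * P)" .
  have g2: "sGamma2 V adj \<sigma> \<phi> \<phi> x0 \<ge> iN * (lam^2 * P)"
    using CD_Gam2[OF CD x0(1), of \<phi>] unfolding iN_def eig P_def by (simp add: power2_eq_square algebra_simps)
  have "2 * iN * (lam^2 * P) - 2 * lam * G + c * lam * (2 * G - 2 * lam * P) \<le> 0"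
    using lap_max[OF x0] L g2 by linarith
  also have "2 * iN * (lam^2 * P) - 2 * lam * G + c * lam * (2 * G - 2 * lam * P)
        = 2 * lam * s * (G - (1 + s) * lam * P)"
    unfolding s(2) c_def by (simp add: algebra_simps power2_eq_square)
  finally have "2 * lam * s * (G - (1 + s) * lam * P) \<le> 0" .
  moreover have "2 * lam * s > 0" using lam s by simp
  ultimately have GP: "G - (1 + s) * lam * P \<le> 0"
  proof -
    assume a: "2 * lam * s * (G - (1 + s) * lam * P) \<le> 0" "2 * lam * s > 0"
    show ?thesis
    proof (rule ccontr)
      assume "\<not> G - (1 + s) * lam * P \<le> 0"
      hence "0 < G - (1 + s) * lam * P" by simp
      hence "2 * lam * s * (G - (1 + s) * lam * P) > 0" using a(2) by (rule mult_pos_pos[rotated])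
      thus False using a(1) by linarith
    qed
  qed
  hence GP: "G \<le> (1 + s) * lam * P" by simp
  have PM: "P \<le> M2" using M2 x0(1) unfolding P_def by (simp add: power2_eq_square)
  have "sGamma V adj \<sigma> \<phi> \<phi> w \<le> K w" unfolding K_def c_def using lam s
    by (simp add: mult_nonneg_nonneg)
  also have "\<dots> \<le> K x0" using x0 w by blast
  also have "\<dots> = G + (1 + s) * lam * P" unfolding K_def G_def P_def c_def by simp
  also have "\<dots> \<le> 2 * (1 + s) * lam * P" using GP by (simp add: algebra_simps)
  also have "\<dots> \<le> 2 * (1 + s) * lam * M2" using PM lam s by (intro mult_left_mono) auto
  finally show ?thesis unfolding s_def .
qed

lemma lam_lower:
  assumes CD: "CD V adj \<sigma> 0 N" and N: "N > 1"
  shows "\<exists>\<mu>. \<mu> > 0 \<and> (\<forall>g. Qf g g \<ge> \<mu> * ip g g) \<and>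
     1 \<le> 4 * (1 + sqrtN N) * real (max_deg V adj) * (\<mu> / 2)
           * (real (diam V adj + 1) * real_of_int \<lceil>real (diam V adj + 1) / 2\<rceil>)"
proof -
  obtain \<phi> \<mu> where out: "\<forall>x. x \<notin> V \<longrightarrow> \<phi> x = 0" and ip1: "ip \<phi> \<phi> = 1" and Qm: "Qf \<phi> \<phi> = \<mu>"
    and ray: "\<forall>g. Qf g g \<ge> \<mu> * ip g g" and eig: "\<forall>x. slap V adj \<sigma> \<phi> x = - (\<mu> / 2) * \<phi> x"
    using eigen_exists by blast
  define R where "R = real (diam V adj + 1) * real_of_int \<lceil>real (diam V adj + 1) / 2\<rceil>"
  define d where "d = real (max_deg V adj)"
  have "real_of_int \<lceil>real (diam V adj + 1) / 2\<rceil> \<ge> 0"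
    by (smt (verit) le_of_int_ceiling of_nat_0_le_iff divide_nonneg_nonneg)
  hence R0: "R \<ge> 0" unfolding R_def by simp
  obtain x0 where x0: "x0 \<in> V" "\<forall>x\<in>V. (\<phi> x)^2 \<le> (\<phi> x0)^2" using max_V[of "\<lambda>x. (\<phi> x)^2"] by blast
  have f0: "\<phi> x0 \<noteq> 0"
  proof
    assume "\<phi> x0 = 0"
    hence "\<forall>x\<in>V. \<phi> x = 0" using x0(2) by simp
    hence "ip \<phi> \<phi> = 0" unfolding ip_def by simp
    thus False using ip1 by simp
  qed
  have P: "(\<phi> x0)^2 > 0" using f0 by simp
  have rowQ: "\<forall>w\<in>V. (\<Sum>y\<in>Nb w. (\<phi> w - \<sigma> w y * \<phi> y)^2) \<le> Qf \<phi> \<phi>"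
  proof
    fix w assume w: "w \<in> V"
    have "(\<Sum>y\<in>Nb w. (\<phi> w - \<sigma> w y * \<phi> y)^2) \<le> (\<Sum>x\<in>V. \<Sum>y\<in>Nb x. (\<phi> x - \<sigma> x y * \<phi> y)^2)"
      by (rule member_le_sum[OF w _ finV]) (simp add: sum_nonneg)
    thus "(\<Sum>y\<in>Nb w. (\<phi> w - \<sigma> w y * \<phi> y)^2) \<le> Qf \<phi> \<phi>" unfolding Qf_def by (simp add: power2_eq_square)
  qed
  have "(\<phi> x0)^2 \<le> R * Qf \<phi> \<phi>" using path_main[OF x0(1) f0 rowQ] unfolding R_def by simp
  hence "(\<phi> x0)^2 \<le> R * \<mu>" using Qm by simp
  hence "R * \<mu> > 0" using P by linarith
  hence mu: "\<mu> > 0" using R0 by (simp add: zero_less_mult_iff)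
  define lam where "lam = \<mu> / 2"
  have lam: "lam > 0" unfolding lam_def using mu by simp
  have Gb: "sGamma V adj \<sigma> \<phi> \<phi> w \<le> 2 * (1 + sqrtN N) * lam * (\<phi> x0)^2" if "w \<in> V" for w
    using static_bound[OF CD N _ lam x0(2) that] eig unfolding lam_def by simp
  have rowG: "\<forall>w\<in>V. (\<Sum>y\<in>Nb w. (\<phi> w - \<sigma> w y * \<phi> y)^2) \<le> 4 * (1 + sqrtN N) * d * lam * (\<phi> x0)^2"
  proof
    fix w assume w: "w \<in> V"
    have "(\<Sum>y\<in>Nb w. (\<phi> w - \<sigma> w y * \<phi> y)^2) = 2 * dg w * sGamma V adj \<sigma> \<phi> \<phi> w" by (rule Gam_sum[OF w])
    also have "\<dots> \<le> 2 * d * (2 * (1 + sqrtN N) * lam * (\<phi> x0)^2)"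
      using Gb[OF w] dg_le[OF w] Gam_nonneg[of \<phi> w] dg_pos[OF w] unfolding d_def
      by (intro mult_mono) auto
    finally show "(\<Sum>y\<in>Nb w. (\<phi> w - \<sigma> w y * \<phi> y)^2) \<le> 4 * (1 + sqrtN N) * d * lam * (\<phi> x0)^2"
      by (simp add: algebra_simps)
  qed
  have "(\<phi> x0)^2 \<le> R * (4 * (1 + sqrtN N) * d * lam * (\<phi> x0)^2)"
    using path_main[OF x0(1) f0 rowG] unfolding R_def by simp
  hence "1 * (\<phi> x0)^2 \<le> (R * 4 * (1 + sqrtN N) * d * lam) * (\<phi> x0)^2" by (simp add: algebra_simps)
  hence "1 \<le> R * 4 * (1 + sqrtN N) * d * lam" using P by (rule mult_right_le_imp_le)
  thus ?thesis using mu ray unfolding R_def d_def lam_def by (auto simp: algebra_simps)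
qed

end

lemma maxprin:
  fixes h h' :: "'a \<Rightarrow> real \<Rightarrow> real"
  assumes fin: "finite V" and ne: "V \<noteq> {}"
    and der: "\<And>x t. x \<in> V \<Longrightarrow> (h x has_real_derivative h' x t) (at t)"
    and neg: "\<And>x t. x \<in> V \<Longrightarrow> t > 0 \<Longrightarrow> (\<forall>y\<in>V. h y t \<le> h x t) \<Longrightarrow> h' x t < 0"
    and init: "\<And>x. x \<in> V \<Longrightarrow> h x 0 \<le> B"
    and x1: "x1 \<in> V" and t1: "t1 \<ge> 0"
  shows "h x1 t1 \<le> B"
proof (rule ccontr)
  assume bad: "\<not> h x1 t1 \<le> B"
  have cont: "continuous_on {0..t1} (h y)" if "y \<in> V" for y
    using der[OF that] by (intro continuous_at_imp_continuous_on ballI DERIV_isCont) blast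
  have ex: "\<exists>ty\<in>{0..t1}. \<forall>t\<in>{0..t1}. h y t \<le> h y ty" if yV: "y \<in> V" for y
    by (rule continuous_attains_sup[OF compact_Icc _ cont[OF yV]]) (use t1 in simp)
  have "\<forall>y\<in>V. \<exists>ty. ty \<in> {0..t1} \<and> (\<forall>t\<in>{0..t1}. h y t \<le> h y ty)" using ex by blast
  from bchoice[OF this] obtain T where T0: "\<forall>y\<in>V. T y \<in> {0..t1} \<and> (\<forall>t\<in>{0..t1}. h y t \<le> h y (T y))"
    by blast
  have T: "T y \<in> {0..t1} \<and> (\<forall>t\<in>{0..t1}. h y t \<le> h y (T y))" if "y \<in> V" for y
    using T0 that by blast
  have "Max ((\<lambda>y. h y (T y)) ` V) \<in> (\<lambda>y. h y (T y)) ` V" using fin ne by simp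
  then obtain ys where ys: "ys \<in> V" "h ys (T ys) = Max ((\<lambda>y. h y (T y)) ` V)" by auto
  have ysmax: "h y (T y) \<le> h ys (T ys)" if "y \<in> V" for y unfolding ys(2) using fin that by simp
  define ts where "ts = T ys"
  have ts: "ts \<in> {0..t1}" "\<forall>t\<in>{0..t1}. h ys t \<le> h ys ts" using T[OF ys(1)] unfolding ts_def by auto
  have "h x1 t1 \<le> h x1 (T x1)" using T[OF x1] t1 by auto
  also have "\<dots> \<le> h ys ts" using ysmax[OF x1] unfolding ts_def .
  finally have "h ys ts > B" using bad by simp
  hence "ts \<noteq> 0" using init[OF ys(1)] by auto
  hence tspos: "ts > 0" using ts(1) by simp
  have "\<forall>y\<in>V. h y ts \<le> h ys ts"
  proof
    fix y assume y: "y \<in> V"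
    have "h y ts \<le> h y (T y)" using T[OF y] ts(1) by blast
    also have "\<dots> \<le> h ys ts" using ysmax[OF y] unfolding ts_def .
    finally show "h y ts \<le> h ys ts" .
  qed
  hence "h' ys ts < 0" using neg[OF ys(1) tspos] by blast
  then obtain d where d: "d > 0" "\<forall>e>0. e < d \<longrightarrow> h ys ts < h ys (ts - e)"
    using DERIV_neg_dec_left[OF der[OF ys(1)]] by blast
  define e where "e = min d ts / 2"
  have e: "e > 0" "e < d" "e \<le> ts" unfolding e_def using d tspos by auto
  have "h ys ts < h ys (ts - e)" using d e by blast
  moreover have "ts - e \<in> {0..t1}" using e ts(1) by auto
  ultimately have "h ys (ts - e) \<le> h ys ts" using ts(2) by blast
  thus False using \<open>h ys ts < h ys (ts - e)\<close> by simp
qed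

context sgr
begin

definition hc :: "('a \<Rightarrow> real) \<Rightarrow> nat \<Rightarrow> 'a \<Rightarrow> real" where
  "hc f n = ((slap V adj \<sigma>) ^^ n) f"

definition heat :: "('a \<Rightarrow> real) \<Rightarrow> real \<Rightarrow> 'a \<Rightarrow> real" where
  "heat f t x = (\<Sum>n. (hc f n x / fact n) * t ^ n)"

lemma slap_bound:
  assumes B: "\<And>z. \<bar>g z\<bar> \<le> B" shows "\<bar>slap V adj \<sigma> g x\<bar> \<le> 2 * B"
proof -
  have B0: "B \<ge> 0" using B[of x] by linarith
  have "\<bar>\<Sum>y\<in>Nb x. \<sigma> x y * g y - g x\<bar> \<le> (\<Sum>y\<in>Nb x. \<bar>\<sigma> x y * g y - g x\<bar>)" by (rule sum_abs)
  also have "\<dots> \<le> (\<Sum>y\<in>Nb x. 2 * B)"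
  proof (rule sum_mono)
    fix y assume "y \<in> Nb x"
    hence "\<bar>\<sigma> x y\<bar> = 1" using sig_abs[of x y] Nb_iff[of y x] by simp
    hence a: "\<bar>\<sigma> x y * g y\<bar> = \<bar>g y\<bar>" by (simp add: abs_mult)
    have "\<bar>\<sigma> x y * g y - g x\<bar> \<le> \<bar>\<sigma> x y * g y\<bar> + \<bar>g x\<bar>" by (rule abs_triangle_ineq4)
    hence "\<bar>\<sigma> x y * g y - g x\<bar> \<le> \<bar>g y\<bar> + \<bar>g x\<bar>" unfolding a .
    thus "\<bar>\<sigma> x y * g y - g x\<bar> \<le> 2 * B" using B[of x] B[of y] by linarith
  qed
  also have "\<dots> = dg x * (2 * B)" unfolding deg_def by simp
  finally have S: "\<bar>\<Sum>y\<in>Nb x. \<sigma> x y * g y - g x\<bar> \<le> dg x * (2 * B)" .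
  show ?thesis
  proof (cases "dg x = 0")
    case True thus ?thesis unfolding slap_eq using B0 by simp
  next
    case False
    hence d: "dg x > 0" by simp
    have "\<bar>slap V adj \<sigma> g x\<bar> = \<bar>\<Sum>y\<in>Nb x. \<sigma> x y * g y - g x\<bar> / dg x"
      unfolding slap_eq by simp
    also have "\<dots> \<le> (dg x * (2 * B)) / dg x" by (rule divide_right_mono[OF S]) simp
    also have "\<dots> = 2 * B" using d by simp
    finally show ?thesis .
  qed
qed

lemma hc_bound: assumes "\<And>z. \<bar>f z\<bar> \<le> 1" shows "\<bar>hc f n x\<bar> \<le> 2 ^ n"
proof (induction n arbitrary: x)
  case 0 thus ?case unfolding hc_def using assms by simp
next
  case (Suc n)
  have "\<bar>slap V adj \<sigma> (hc f n) x\<bar> \<le> 2 * 2 ^ n" by (rule slap_bound) (rule Suc.IH)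
  thus ?case unfolding hc_def by simp
qed

lemma hc_Suc: "hc f (Suc n) = slap V adj \<sigma> (hc f n)"
  unfolding hc_def by simp

lemma heat_summable: assumes "\<And>z. \<bar>f z\<bar> \<le> 1" shows "summable (\<lambda>n. (hc f n x / fact n) * t ^ n)"
proof (rule summable_comparison_test')
  show "summable (\<lambda>n. inverse (fact n) * (2 * \<bar>t\<bar>) ^ n)" by (rule summable_exp)
  fix n :: nat
  have "norm (hc f n x / fact n * t ^ n) = \<bar>hc f n x\<bar> * \<bar>t\<bar> ^ n / fact n" by (simp add: abs_mult power_abs)
  also have "\<dots> \<le> 2 ^ n * \<bar>t\<bar> ^ n / fact n"
    using hc_bound[OF assms] by (intro divide_right_mono mult_right_mono) auto
  also have "\<dots> = inverse (fact n) * (2 * \<bar>t\<bar>) ^ n" by (simp add: power_mult_distrib field_simps)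
  finally show "norm (hc f n x / fact n * t ^ n) \<le> inverse (fact n) * (2 * \<bar>t\<bar>) ^ n" .
qed

lemma heat_0: "heat f 0 x = f x"
  unfolding heat_def hc_def using powser_zero[of "\<lambda>n. ((slap V adj \<sigma>) ^^ n) f x / fact n"] by simp

lemma slap_scale: "slap V adj \<sigma> (\<lambda>y. a * g y) x = a * slap V adj \<sigma> g x"
  unfolding slap_eq by (simp add: sum_distrib_left algebra_simps)

lemma slap_suminf:
  assumes S: "\<And>y. summable (\<lambda>n. F n y)"
  shows "slap V adj \<sigma> (\<lambda>y. \<Sum>n. F n y) x = (\<Sum>n. slap V adj \<sigma> (F n) x)"
proof -
  have "(\<Sum>y\<in>Nb x. \<sigma> x y * (\<Sum>n. F n y) - (\<Sum>n. F n x)) = (\<Sum>y\<in>Nb x. \<Sum>n. \<sigma> x y * F n y - F n x)"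
  proof (rule sum.cong[OF refl])
    fix y
    have "\<sigma> x y * (\<Sum>n. F n y) = (\<Sum>n. \<sigma> x y * F n y)" using suminf_mult[OF S[of y]] by simp
    thus "\<sigma> x y * (\<Sum>n. F n y) - (\<Sum>n. F n x) = (\<Sum>n. \<sigma> x y * F n y - F n x)"
      using suminf_diff[OF summable_mult[OF S[of y]] S[of x]] by simp
  qed
  also have "\<dots> = (\<Sum>n. \<Sum>y\<in>Nb x. \<sigma> x y * F n y - F n x)"
    by (rule suminf_sum[symmetric]) (intro summable_diff summable_mult S)
  finally have e: "(\<Sum>y\<in>Nb x. \<sigma> x y * (\<Sum>n. F n y) - (\<Sum>n. F n x)) = (\<Sum>n. \<Sum>y\<in>Nb x. \<sigma> x y * F n y - F n x)" .
  have s2: "summable (\<lambda>n. \<Sum>y\<in>Nb x. \<sigma> x y * F n y - F n x)"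
    by (intro summable_sum summable_diff summable_mult S)
  show ?thesis unfolding slap_eq e using suminf_divide[OF s2, of "dg x"] by simp
qed

lemma heat_deriv:
  assumes f: "\<And>z. \<bar>f z\<bar> \<le> 1"
  shows "((\<lambda>t. heat f t x) has_real_derivative slap V adj \<sigma> (heat f t) x) (at t)"
proof -
  define c where "c n = hc f n x / fact n" for n
  have "((\<lambda>t. \<Sum>n. c n * t ^ n) has_real_derivative (\<Sum>n. diffs c n * t ^ n)) (at t)"
    by (rule termdiffs_strong_converges_everywhere) (unfold c_def, rule heat_summable[OF f])
  moreover have "(\<Sum>n. diffs c n * t ^ n) = slap V adj \<sigma> (heat f t) x"
  proof -
    have "diffs c n * t ^ n = slap V adj \<sigma> (\<lambda>y. hc f n y / fact n * t ^ n) x" for n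
    proof -
      have "diffs c n = hc f (Suc n) x / fact n" unfolding diffs_def c_def
        by (simp add: field_simps del: of_nat_Suc)
      hence e1: "diffs c n * t ^ n = (t ^ n / fact n) * slap V adj \<sigma> (hc f n) x"
        unfolding hc_Suc by simp
      have le: "(\<lambda>y. hc f n y / fact n * t ^ n) = (\<lambda>y. (t ^ n / fact n) * hc f n y)"
        by (simp add: field_simps)
      show ?thesis unfolding e1 le by (rule slap_scale[symmetric])
    qed
    hence "(\<Sum>n. diffs c n * t ^ n) = (\<Sum>n. slap V adj \<sigma> (\<lambda>y. hc f n y / fact n * t ^ n) x)" by simp
    also have "\<dots> = slap V adj \<sigma> (heat f t) x"
      unfolding heat_def by (rule slap_suminf[symmetric]) (rule heat_summable[OF f])
    finally show ?thesis .
  qed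
  ultimately show ?thesis unfolding heat_def c_def by simp
qed

end

context sgr
begin

lemma gam_der:
  assumes f: "\<And>z. \<bar>f z\<bar> \<le> 1"
  shows "((\<lambda>t. sGamma V adj \<sigma> (heat f t) (heat f t) x) has_real_derivative
           2 * sGamma V adj \<sigma> (heat f t) (slap V adj \<sigma> (heat f t)) x) (at t)"
proof -
  define D where "D = slap V adj \<sigma> (heat f t)"
  have ud: "((\<lambda>t. heat f t y) has_real_derivative D y) (at t)" for y
    unfolding D_def by (rule heat_deriv[of f, OF f])
  have td: "((\<lambda>t. \<sigma> x y * heat f t y - heat f t x) has_real_derivative (\<sigma> x y * D y - D x)) (at t)" for y
    using Deriv.field_differentiable_diff[OF DERIV_cmult[OF ud[of y], of "\<sigma> x y"] ud[of x]] .
  have "((\<lambda>t. (\<Sum>y\<in>Nb x. (\<sigma> x y * heat f t y - heat f t x) * (\<sigma> x y * heat f t y - heat f t x)))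
      has_real_derivative (\<Sum>y\<in>Nb x. (\<sigma> x y * D y - D x) * (\<sigma> x y * heat f t y - heat f t x)
          + (\<sigma> x y * D y - D x) * (\<sigma> x y * heat f t y - heat f t x))) (at t)"
    by (intro DERIV_sum DERIV_mult td)
  hence "((\<lambda>t. (\<Sum>y\<in>Nb x. (\<sigma> x y * heat f t y - heat f t x) * (\<sigma> x y * heat f t y - heat f t x)) / (2 * dg x))
      has_real_derivative (\<Sum>y\<in>Nb x. (\<sigma> x y * D y - D x) * (\<sigma> x y * heat f t y - heat f t x)
          + (\<sigma> x y * D y - D x) * (\<sigma> x y * heat f t y - heat f t x)) / (2 * dg x)) (at t)"
    by (rule DERIV_cdivide)
  moreover have "(\<Sum>y\<in>Nb x. (\<sigma> x y * D y - D x) * (\<sigma> x y * heat f t y - heat f t x)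
          + (\<sigma> x y * D y - D x) * (\<sigma> x y * heat f t y - heat f t x)) / (2 * dg x)
       = 2 * sGamma V adj \<sigma> (heat f t) D x"
  proof -
    have "(\<Sum>y\<in>Nb x. (\<sigma> x y * D y - D x) * (\<sigma> x y * heat f t y - heat f t x)
          + (\<sigma> x y * D y - D x) * (\<sigma> x y * heat f t y - heat f t x))
        = 2 * (\<Sum>y\<in>Nb x. (\<sigma> x y * heat f t y - heat f t x) * (\<sigma> x y * D y - D x))"
      by (simp add: sum_distrib_left algebra_simps)
    thus ?thesis unfolding Gam_eq by simp
  qed
  ultimately show ?thesis unfolding Gam_eq[of _ _ x] D_def by simp
qed

definition Hf :: "('a \<Rightarrow> real) \<Rightarrow> real \<Rightarrow> 'a \<Rightarrow> real" where
  "Hf f t z = heat f t z * heat f t z + (2 * t) * sGamma V adj \<sigma> (heat f t) (heat f t) z"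

definition Hd :: "('a \<Rightarrow> real) \<Rightarrow> real \<Rightarrow> 'a \<Rightarrow> real" where
  "Hd f t z = 2 * heat f t z * slap V adj \<sigma> (heat f t) z + 2 * sGamma V adj \<sigma> (heat f t) (heat f t) z
      + (2 * t) * (2 * sGamma V adj \<sigma> (heat f t) (slap V adj \<sigma> (heat f t)) z)"

lemma Hf_der:
  assumes f: "\<And>z. \<bar>f z\<bar> \<le> 1"
  shows "((\<lambda>t. Hf f t x) has_real_derivative Hd f t x) (at t)"
proof -
  have d1: "((\<lambda>t. heat f t x) has_real_derivative slap V adj \<sigma> (heat f t) x) (at t)"
    by (rule heat_deriv[OF f])
  have d2: "((\<lambda>t. sGamma V adj \<sigma> (heat f t) (heat f t) x) has_real_derivative
           2 * sGamma V adj \<sigma> (heat f t) (slap V adj \<sigma> (heat f t)) x) (at t)"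
    by (rule gam_der[OF f])
  have d3: "((\<lambda>t. 2 * t) has_real_derivative 2 * 1) (at t)" by (rule DERIV_cmult[OF DERIV_ident])
  show ?thesis unfolding Hf_def
    by (rule DERIV_cong[OF Deriv.field_differentiable_add[OF DERIV_mult[OF d1 d1] DERIV_mult[OF d3 d2]]])
       (simp add: Hd_def algebra_simps)
qed

lemma Hf_bound:
  assumes CD: "CD V adj \<sigma> 0 N" and N: "N > 1" and f: "\<And>z. \<bar>f z\<bar> \<le> 1"
    and x: "x \<in> V" and t: "t \<ge> 0"
  shows "Hf f t x \<le> 1"
proof -
  have iN: "invN N \<ge> 0" using sN_facts[OF N] by simp
  have eps: "Hf f t x \<le> 1 + e * t" if e: "e > 0" for e
  proof -
    have "Hf f t x - e * t \<le> 1"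
    proof (rule maxprin[where h="\<lambda>x t. Hf f t x - e * t" and h'="\<lambda>x t. Hd f t x - e" and V=V and B=1])
      show "finite V" by (rule finV)
      show "V \<noteq> {}" by (rule Vne)
      show "x \<in> V" by (rule x)
      show "0 \<le> t" by (rule t)
    next
      fix y s assume "y \<in> V"
      show "((\<lambda>t. Hf f t y - e * t) has_real_derivative Hd f s y - e) (at s)"
        using Deriv.field_differentiable_diff[OF Hf_der[of f, OF f] DERIV_cmult[OF DERIV_ident, of e]] by simp
    next
      fix y s assume y: "y \<in> V" and s: "s > 0" and mx: "\<forall>z\<in>V. Hf f s z - e * s \<le> Hf f s y - e * s"
      have "\<forall>z\<in>V. Hf f s z \<le> Hf f s y" using mx by simp
      hence l: "lap V adj (Hf f s) y \<le> 0" using lap_max[OF y] by blast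
      have "lap V adj (Hf f s) y = lap V adj (\<lambda>z. heat f s z * heat f s z) y
            + (2 * s) * lap V adj (sGamma V adj \<sigma> (heat f s) (heat f s)) y"
        unfolding Hf_def by (rule lap_lin)
      also have "\<dots> = Hd f s y + 4 * s * sGamma2 V adj \<sigma> (heat f s) (heat f s) y"
        unfolding lap_mm lap_Gam Hd_def by (simp add: algebra_simps)
      finally have "Hd f s y = lap V adj (Hf f s) y - 4 * s * sGamma2 V adj \<sigma> (heat f s) (heat f s) y" by simp
      moreover have "sGamma2 V adj \<sigma> (heat f s) (heat f s) y \<ge> 0"
        using CD_Gam2[OF CD y, of "heat f s"] iN by (meson order_trans mult_nonneg_nonneg zero_le_power2)
      moreover have "0 \<le> 4 * s * sGamma2 V adj \<sigma> (heat f s) (heat f s) y"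
        using s \<open>sGamma2 V adj \<sigma> (heat f s) (heat f s) y \<ge> 0\<close> by simp
      ultimately have "Hd f s y \<le> 0" using l by linarith
      thus "Hd f s y - e < 0" using e by simp
    next
      fix y assume "y \<in> V"
      have "Hf f 0 y = f y * f y" unfolding Hf_def heat_0 by simp
      also have "\<dots> \<le> 1" using f[of y] by (metis abs_le_square_iff abs_one power2_eq_square power_one)
      finally show "Hf f 0 y - e * 0 \<le> 1" by simp
    qed
    thus ?thesis by simp
  qed
  show ?thesis
  proof (cases "t = 0")
    case True thus ?thesis using eps[of 1] by simp
  next
    case False
    hence tp: "t > 0" using t by simp
    show ?thesis
    proof (rule field_le_epsilon)
      fix e :: real assume "e > 0"
      thus "Hf f t x \<le> 1 + e" using eps[of "e / t"] tp by simp
    qed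
  qed
qed

lemma grad_bound:
  assumes CD: "CD V adj \<sigma> 0 N" and N: "N > 1" and f: "\<And>z. \<bar>f z\<bar> \<le> 1"
    and x: "x \<in> V" and y: "y \<in> Nb x" and t: "t > 0"
  shows "\<bar>heat f t x - \<sigma> x y * heat f t y\<bar> \<le> sqrt (real (max_deg V adj) / t)"
proof -
  let ?u = "heat f t"
  have H: "Hf f t x \<le> 1" using Hf_bound[OF CD N f x] t by simp
  have "2 * t * sGamma V adj \<sigma> ?u ?u x \<le> 1" using H unfolding Hf_def
    by (smt (verit) zero_le_square)
  hence G: "sGamma V adj \<sigma> ?u ?u x \<le> 1 / (2 * t)" using t by (simp add: field_simps)
  have "(?u x - \<sigma> x y * ?u y)^2 \<le> (\<Sum>y\<in>Nb x. (?u x - \<sigma> x y * ?u y)^2)"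
    by (rule member_le_sum[OF y _ Nb_fin]) simp
  also have "\<dots> = 2 * dg x * sGamma V adj \<sigma> ?u ?u x" by (rule Gam_sum[OF x])
  also have "\<dots> \<le> 2 * dg x * (1 / (2 * t))" using G dg_pos[OF x] by (intro mult_left_mono) auto
  also have "\<dots> \<le> real (max_deg V adj) / t" using dg_le[OF x] t by (simp add: field_simps)
  finally show ?thesis using real_le_rsqrt[of "\<bar>?u x - \<sigma> x y * ?u y\<bar>"] by simp
qed

end

context sgr
begin

lemma ipu_der:
  assumes f: "\<And>z. \<bar>f z\<bar> \<le> 1"
  shows "((\<lambda>t. ip g (heat f t)) has_real_derivative ip g (slap V adj \<sigma> (heat f t))) (at t)"
  unfolding ip_def
  by (rule DERIV_sum, rule DERIV_cmult, rule heat_deriv[OF f])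

lemma m_der:
  assumes f: "\<And>z. \<bar>f z\<bar> \<le> 1"
  shows "((\<lambda>t. ip (heat f t) (heat f t)) has_real_derivative - Qf (heat f t) (heat f t)) (at t)"
proof -
  have d: "((\<lambda>t. dg x * heat f t x * heat f t x) has_real_derivative
      dg x * slap V adj \<sigma> (heat f t) x * heat f t x + slap V adj \<sigma> (heat f t) x * (dg x * heat f t x)) (at t)" for x
    by (rule DERIV_mult[OF DERIV_cmult[OF heat_deriv[OF f]] heat_deriv[OF f]])
  have "((\<lambda>t. ip (heat f t) (heat f t)) has_real_derivative
      (\<Sum>x\<in>V. dg x * slap V adj \<sigma> (heat f t) x * heat f t x + slap V adj \<sigma> (heat f t) x * (dg x * heat f t x))) (at t)"
    unfolding ip_def by (rule DERIV_sum, rule d)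
  moreover have "(\<Sum>x\<in>V. dg x * slap V adj \<sigma> (heat f t) x * heat f t x + slap V adj \<sigma> (heat f t) x * (dg x * heat f t x))
      = 2 * ip (heat f t) (slap V adj \<sigma> (heat f t))"
    unfolding ip_def by (simp add: sum_distrib_left algebra_simps)
  ultimately show ?thesis unfolding ip_slap_Qf by simp
qed

lemma heat0_fun: "heat f 0 = f" using heat_0 by auto

lemma decay:
  assumes f: "\<And>z. \<bar>f z\<bar> \<le> 1" and ray: "\<forall>g. Qf g g \<ge> \<mu> * ip g g" and t: "t \<ge> 0"
  shows "ip (heat f t) (heat f t) \<le> exp (- \<mu> * t) * ip f f"
proof -
  define g where "g s = exp (\<mu> * s) * ip (heat f s) (heat f s)" for s
  have ed: "((\<lambda>s. exp (\<mu> * s)) has_real_derivative exp (\<mu> * s) * (\<mu> * 1)) (at s)" for s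
    by (rule DERIV_exp[THEN DERIV_chain2], rule DERIV_cmult, rule DERIV_ident)
  have "g t \<le> g 0"
  proof (rule DERIV_nonpos_imp_nonincreasing[OF t])
    fix s :: real
    have D: "(g has_real_derivative exp (\<mu> * s) * (\<mu> * 1) * ip (heat f s) (heat f s) + - Qf (heat f s) (heat f s) * exp (\<mu> * s)) (at s)"
      unfolding g_def by (rule DERIV_mult[OF ed m_der[OF f]])
    have "exp (\<mu> * s) * (\<mu> * 1) * ip (heat f s) (heat f s) + - Qf (heat f s) (heat f s) * exp (\<mu> * s)
         = exp (\<mu> * s) * (\<mu> * ip (heat f s) (heat f s) - Qf (heat f s) (heat f s))" by (simp add: algebra_simps)
    also have "\<dots> \<le> 0" using ray by (intro mult_nonneg_nonpos) auto
    finally show "\<exists>y. (g has_real_derivative y) (at s) \<and> y \<le> 0" using D by blast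
  qed
  hence "exp (\<mu> * t) * ip (heat f t) (heat f t) \<le> ip f f" unfolding g_def heat0_fun by simp
  hence "exp (- \<mu> * t) * (exp (\<mu> * t) * ip (heat f t) (heat f t)) \<le> exp (- \<mu> * t) * ip f f"
    by (rule mult_left_mono) simp
  thus ?thesis by (simp add: exp_minus field_simps)
qed

lemma cross:
  assumes f: "\<And>z. \<bar>f z\<bar> \<le> 1" and ray: "\<forall>g. Qf g g \<ge> \<mu> * ip g g" and t: "t \<ge> 0"
  shows "ip f (heat f t) \<le> exp (- \<mu> * t / 2) * ip f f"
proof -
  define a where "a = exp (- \<mu> * t / 2)"
  have a: "a > 0" unfolding a_def by simp
  have aa: "exp (- \<mu> * t) = a * a" unfolding a_def by (simp add: exp_add[symmetric])
  have pt: "2 * (f x * heat f t x) \<le> a * (f x * f x) + (1 / a) * (heat f t x * heat f t x)" for x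
  proof -
    have "0 \<le> (a * f x - heat f t x)^2" by simp
    hence "0 \<le> (1 / a) * (a * f x - heat f t x)^2" using a by simp
    also have "(1 / a) * (a * f x - heat f t x)^2 = a * (f x * f x) + (1 / a) * (heat f t x * heat f t x) - 2 * (f x * heat f t x)"
      using a by (simp add: power2_eq_square field_simps)
    finally show ?thesis by simp
  qed
  have "2 * ip f (heat f t) = (\<Sum>x\<in>V. dg x * (2 * (f x * heat f t x)))"
    unfolding ip_def by (simp add: sum_distrib_left algebra_simps)
  also have "\<dots> \<le> (\<Sum>x\<in>V. dg x * (a * (f x * f x) + (1 / a) * (heat f t x * heat f t x)))"
    by (rule sum_mono, rule mult_left_mono[OF pt]) simp
  also have "\<dots> = a * ip f f + (1 / a) * ip (heat f t) (heat f t)"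
    unfolding ip_def by (simp add: sum.distrib sum_distrib_left algebra_simps)
  also have "\<dots> \<le> a * ip f f + (1 / a) * (exp (- \<mu> * t) * ip f f)"
    using decay[OF f ray t] a by (intro add_left_mono mult_left_mono) auto
  also have "\<dots> = 2 * (a * ip f f)" unfolding aa using a by simp
  finally show ?thesis unfolding a_def by simp
qed

definition iota :: "('a \<Rightarrow> real) \<Rightarrow> real" where
  "iota f = (\<Sum>x\<in>V. \<Sum>y\<in>Nb x. \<bar>f x - \<sigma> x y * f y\<bar>) / 2"

lemma ipslap_bound:
  assumes CD: "CD V adj \<sigma> 0 N" and N: "N > 1" and f: "\<And>z. \<bar>f z\<bar> \<le> 1" and t: "t > 0"
  shows "- ip f (slap V adj \<sigma> (heat f t)) \<le> iota f * sqrt (real (max_deg V adj) / t)"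
proof -
  define c where "c = sqrt (real (max_deg V adj) / t)"
  have "- ip f (slap V adj \<sigma> (heat f t)) = Qf (heat f t) f / 2" unfolding ip_slap_Qf by simp
  also have "Qf (heat f t) f \<le> (\<Sum>x\<in>V. \<Sum>y\<in>Nb x. c * \<bar>f x - \<sigma> x y * f y\<bar>)"
    unfolding Qf_def
  proof (intro sum_mono)
    fix x y assume x: "x \<in> V" and y: "y \<in> Nb x"
    have "(heat f t x - \<sigma> x y * heat f t y) * (f x - \<sigma> x y * f y)
        \<le> \<bar>heat f t x - \<sigma> x y * heat f t y\<bar> * \<bar>f x - \<sigma> x y * f y\<bar>"
      by (metis abs_ge_self abs_mult)
    also have "\<dots> \<le> c * \<bar>f x - \<sigma> x y * f y\<bar>"
      unfolding c_def by (rule mult_right_mono[OF grad_bound[OF CD N f x y t]]) simp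
    finally show "(heat f t x - \<sigma> x y * heat f t y) * (f x - \<sigma> x y * f y) \<le> c * \<bar>f x - \<sigma> x y * f y\<bar>" .
  qed
  hence "Qf (heat f t) f / 2 \<le> (\<Sum>x\<in>V. \<Sum>y\<in>Nb x. c * \<bar>f x - \<sigma> x y * f y\<bar>) / 2" by simp
  also have "\<dots> = iota f * c" unfolding iota_def by (simp add: sum_distrib_left algebra_simps)
  finally show ?thesis unfolding c_def .
qed

lemma buser:
  assumes CD: "CD V adj \<sigma> 0 N" and N: "N > 1" and f: "\<And>z. \<bar>f z\<bar> \<le> 1" and t: "t \<ge> 0"
  shows "ip f f - ip f (heat f t) \<le> 2 * iota f * sqrt (real (max_deg V adj)) * sqrt t"
proof (cases "t = 0")
  case True thus ?thesis using heat0_fun by simp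
next
  case False
  hence tp: "t > 0" using t by simp
  define d where "d = real (max_deg V adj)"
  define F where "F s = ip f f - ip f (heat f s) - 2 * iota f * sqrt d * sqrt s" for s
  have ipc: "isCont (\<lambda>s. ip f (heat f s)) s" for s by (rule DERIV_isCont[OF ipu_der[OF f]])
  have c1: "continuous_on {0..t} (\<lambda>s. ip f (heat f s))"
    by (rule continuous_at_imp_continuous_on) (blast intro: ipc)
  have c2: "continuous_on {0..t} (\<lambda>s. 2 * iota f * sqrt d * sqrt s)"
    by (intro continuous_on_mult continuous_on_const continuous_on_real_sqrt continuous_on_id)
  have cont: "continuous_on {0..t} F" unfolding F_def
    by (intro continuous_on_diff continuous_on_const c1 c2)
  have Fd: "(F has_real_derivative - ip f (slap V adj \<sigma> (heat f s)) - 2 * iota f * sqrt d * (inverse (sqrt s) / 2)) (at s)"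
    if s: "s > 0" for s
    unfolding F_def
    by (rule DERIV_cong[OF Deriv.field_differentiable_diff[OF Deriv.field_differentiable_diff[OF DERIV_const ipu_der[OF f]]
          DERIV_cmult[OF DERIV_real_sqrt[OF s]]]]) simp
  have "\<exists>l z. 0 < z \<and> z < t \<and> (F has_real_derivative l) (at z) \<and> F t - F 0 = (t - 0) * l"
  proof (rule MVT[OF tp cont])
    fix z assume "0 < z" "z < t"
    thus "F differentiable (at z)" using Fd unfolding real_differentiable_def by blast
  qed
  then obtain l z where z: "0 < z" "(F has_real_derivative l) (at z)" "F t - F 0 = t * l" by auto
  have l: "l = - ip f (slap V adj \<sigma> (heat f z)) - 2 * iota f * sqrt d * (inverse (sqrt z) / 2)"
    using DERIV_unique[OF z(2) Fd[OF z(1)]] .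
  have "- ip f (slap V adj \<sigma> (heat f z)) \<le> iota f * sqrt (d / z)"
    using ipslap_bound[OF CD N f z(1)] unfolding d_def .
  also have "iota f * sqrt (d / z) = 2 * iota f * sqrt d * (inverse (sqrt z) / 2)"
  proof -
    have "sqrt (d / z) = sqrt d / sqrt z" by (rule real_sqrt_divide)
    moreover have "inverse (sqrt z) = 1 / sqrt z" by (rule inverse_eq_divide)
    ultimately show ?thesis by simp
  qed
  finally have "l \<le> 0" unfolding l by simp
  hence "t * l \<le> 0" using tp by (simp add: mult_nonneg_nonpos)
  hence "F t \<le> F 0" using z(3) by linarith
  moreover have "F 0 = 0" unfolding F_def heat0_fun by simp
  ultimately have "F t \<le> 0" by simp
  thus ?thesis by (simp add: F_def d_def)
qed

end

context sgr
begin

lemma main: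
  assumes CD: "CD V adj \<sigma> 0 N" and N: "N > 1"
  shows "real (vol V adj) \<le> 8 * sqrt ((1 + sqrtN N) * ln 2) * real (max_deg V adj)
           * frustration V adj \<sigma>
           * sqrt (real (diam V adj + 1) * real_of_int \<lceil>real (diam V adj + 1) / 2\<rceil>)"
proof -
  define Fr where "Fr \<tau> = (\<Sum>x\<in>V. \<Sum>y\<in>Nb x. \<bar>\<tau> x - \<sigma> x y * \<tau> y\<bar>) / 2" for \<tau> :: "'a \<Rightarrow> real"
  define P where "P = (V \<rightarrow>\<^sub>E {-1, 1::real})"
  have finP: "finite P" unfolding P_def by (intro finite_PiE finV) simp
  have "restrict (\<lambda>_. 1) V \<in> P" unfolding P_def by simp
  hence neP: "Fr ` P \<noteq> {}" by blast
  have fr: "frustration V adj \<sigma> = Min (Fr ` P)" unfolding frustration_def Fr_def P_def by simp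
  have "Min (Fr ` P) \<in> Fr ` P" using finP neP by simp
  then obtain \<tau> where \<tau>: "\<tau> \<in> P" "frustration V adj \<sigma> = Fr \<tau>" unfolding fr by auto
  define \<tau>0 where "\<tau>0 x = (if x \<in> V then \<tau> x else 0)" for x
  have tv: "\<tau> x = 1 \<or> \<tau> x = -1" if "x \<in> V" for x using \<tau>(1) that unfolding P_def by auto
  have t0b: "\<bar>\<tau>0 z\<bar> \<le> 1" for z unfolding \<tau>0_def using tv by fastforce
  define iot where "iot = frustration V adj \<sigma>"
  have iot: "iota \<tau>0 = iot" unfolding iot_def \<tau>(2) Fr_def iota_def \<tau>0_def
    by (intro arg_cong[where f="\<lambda>x. x / 2"] sum.cong refl) (auto dest: Nb_V)
  have iot0: "iot \<ge> 0" unfolding iot_def \<tau>(2) Fr_def by (intro divide_nonneg_nonneg sum_nonneg) auto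
  define vl where "vl = real (vol V adj)"
  have vl: "ip \<tau>0 \<tau>0 = vl" unfolding vl_def ip_def vol_def of_nat_sum
  proof (intro sum.cong refl)
    fix x assume x: "x \<in> V"
    hence "\<tau>0 x * \<tau>0 x = 1" unfolding \<tau>0_def using tv[OF x] by auto
    thus "dg x * \<tau>0 x * \<tau>0 x = dg x" by (simp add: mult.assoc)
  qed
  define d where "d = real (max_deg V adj)"
  define s where "s = sqrtN N"
  define R where "R = real (diam V adj + 1) * real_of_int \<lceil>real (diam V adj + 1) / 2\<rceil>"
  have d0: "d \<ge> 0" unfolding d_def by simp
  have s0: "s > 0" unfolding s_def using sN_facts[OF N] by simp
  obtain \<mu> where mu: "\<mu> > 0" and ray: "\<forall>g. Qf g g \<ge> \<mu> * ip g g"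
    and low: "1 \<le> 4 * (1 + s) * d * (\<mu> / 2) * R"
    using lam_lower[OF CD N] unfolding s_def d_def R_def by blast
  define t where "t = 2 * ln 2 / \<mu>"
  have tp: "t > 0" unfolding t_def using mu by simp
  have et: "exp (- \<mu> * t / 2) = 1 / 2" unfolding t_def using mu by (simp add: exp_minus)
  have c: "ip \<tau>0 (heat \<tau>0 t) \<le> vl / 2" using cross[where f=\<tau>0 and t=t, OF t0b ray] tp unfolding et vl by simp
  have b: "vl - ip \<tau>0 (heat \<tau>0 t) \<le> 2 * iot * sqrt d * sqrt t"
    using buser[where f=\<tau>0 and t=t, OF CD N t0b] tp unfolding vl iot d_def by simp
  have v1: "vl \<le> 4 * iot * sqrt d * sqrt t" using b c by linarith
  have "t = ln 2 * (1 / (\<mu> / 2))" unfolding t_def by simp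
  also have "1 / (\<mu> / 2) \<le> 4 * (1 + s) * d * R"
  proof -
    have "1 \<le> (4 * (1 + s) * d * R) * (\<mu> / 2)" using low by (simp add: algebra_simps)
    thus ?thesis using mu by (simp add: field_simps)
  qed
  hence "ln 2 * (1 / (\<mu> / 2)) \<le> ln 2 * (4 * (1 + s) * d * R)" by (intro mult_left_mono) simp_all
  finally have tle: "t \<le> 4 * ((1 + s) * ln 2) * d * R" by (simp add: algebra_simps)
  have "sqrt t \<le> sqrt (4 * ((1 + s) * ln 2) * d * R)" using tle by simp
  also have "\<dots> = 2 * sqrt ((1 + s) * ln 2) * sqrt d * sqrt R" by (simp add: real_sqrt_mult)
  finally have st: "sqrt t \<le> 2 * sqrt ((1 + s) * ln 2) * sqrt d * sqrt R" .
  have "vl \<le> 4 * iot * sqrt d * sqrt t" by (rule v1)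
  also have "\<dots> \<le> 4 * iot * sqrt d * (2 * sqrt ((1 + s) * ln 2) * sqrt d * sqrt R)"
    using st iot0 d0 by (intro mult_left_mono) simp_all
  also have "\<dots> = 8 * sqrt ((1 + s) * ln 2) * (sqrt d * sqrt d) * iot * sqrt R" by (simp add: algebra_simps)
  also have "sqrt d * sqrt d = d" using d0 by simp
  finally show ?thesis unfolding vl_def d_def s_def iot_def R_def by (simp add: algebra_simps)
qed

end

theorem theorem3p12:
  fixes V :: "'a set" and adj :: "'a \<Rightarrow> 'a \<Rightarrow> bool" and \<sigma> :: "'a \<Rightarrow> 'a \<Rightarrow> real" and N :: ereal
  assumes "signed_graph V adj \<sigma>"
    and "connected_graph V adj"
    and "\<not> balanced V adj \<sigma>"
    and "N > 1"
    and "CD V adj \<sigma> 0 N"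
  shows "real (vol V adj) \<le> 8 * sqrt ((1 + sqrtN N) * ln 2) * real (max_deg V adj)
           * frustration V adj \<sigma>
           * sqrt (real (diam V adj + 1) * real_of_int \<lceil>real (diam V adj + 1) / 2\<rceil>)"
proof -
  interpret sgr V adj \<sigma> using assms(1-3) by unfold_locales
  show ?thesis by (rule main[OF assms(5,4)])
qed


end
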